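(* Let $G$ be a finite abelian group (written multiplicatively), let $R \subseteq \mathbb{Q}$ be a subring, and let $n \in \mathbb{N}$. The map \[ f: R \otimes_{\mathbb{Z}} Q_n(\mathbb{Z},G) \to Q_n(R,G), \qquad r\otimes\Big(\sum_{g\in G} \alpha_g [g] + I(\mathbb{Z}, G)^{n+1}\Big) \mapsto \sum_{g\in G} r\alpha_g [g] + I(R, G)^{n+1} \] is a well-defined isomorphism of $R$-modules, where $R \otimes_{\mathbb{Z}} Q_n(\mathbb{Z},G)$ is regarded as an $R$-module by extension of scalars.
   Context: For a ring $A$ (commutative with identity) and a group $G$, $A[G]$ denotes the group algebra and $[g]$ the element $g\in G$ viewed in $A[G]$. The augmentation map $\mathrm{aug}: A[G]\to A$ is the $A$-linear map with $[g]\mapsto 1$ for all $g\in G$; the augmentation ideal is $I(A,G) = \ker(\mathrm{aug})$, and $Q_n(A,G) = I(A,G)^n / I(A,G)^{n+1}$. *)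

theory Defs
  imports Complex_Main
begin

text \<open>The finite abelian group G is a type of class finite and ab_group_add; its
group law is written additively (g + h) although the paper writes it multiplicatively.
Elements of the group algebra A[G] (A a subring, given as a set of a commutative ring type)
are functions G to A; the function x stands for the sum over g of x g [g].\<close>

definition galg :: "'a::comm_ring_1 set \<Rightarrow> ('g \<Rightarrow> 'a) set" where
  "galg A = {x. \<forall>g. x g \<in> A}"

definition gadd :: "('g \<Rightarrow> 'a::comm_ring_1) \<Rightarrow> ('g \<Rightarrow> 'a) \<Rightarrow> 'g \<Rightarrow> 'a" where
  "gadd x y = (\<lambda>g. x g + y g)"

definition gsmul :: "'a::comm_ring_1 \<Rightarrow> ('g \<Rightarrow> 'a) \<Rightarrow> 'g \<Rightarrow> 'a" where
  "gsmul c x = (\<lambda>g. c * x g)"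

text \<open>Multiplication in A[G]: [g][h] = [g+h], i.e. convolution.\<close>
definition gmult :: "('g::{finite,ab_group_add} \<Rightarrow> 'a::comm_ring_1) \<Rightarrow> ('g \<Rightarrow> 'a) \<Rightarrow> 'g \<Rightarrow> 'a" where
  "gmult x y = (\<lambda>k. \<Sum>g\<in>UNIV. x g * y (k - g))"

definition aug :: "('g::finite \<Rightarrow> 'a::comm_ring_1) \<Rightarrow> 'a" where
  "aug x = (\<Sum>g\<in>UNIV. x g)"

definition augI :: "'a::comm_ring_1 set \<Rightarrow> ('g::finite \<Rightarrow> 'a) set" where
  "augI A = {x \<in> galg A. aug x = 0}"

inductive_set idealprod ::
  "('g::{finite,ab_group_add} \<Rightarrow> 'a::comm_ring_1) set \<Rightarrow> ('g \<Rightarrow> 'a) set \<Rightarrow> ('g \<Rightarrow> 'a) set"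
  for P :: "('g \<Rightarrow> 'a) set" and J :: "('g \<Rightarrow> 'a) set" where
  zero: "(\<lambda>_. 0) \<in> idealprod P J"
| prod: "x \<in> P \<Longrightarrow> y \<in> J \<Longrightarrow> gmult x y \<in> idealprod P J"
| add: "u \<in> idealprod P J \<Longrightarrow> v \<in> idealprod P J \<Longrightarrow> gadd u v \<in> idealprod P J"
| neg: "u \<in> idealprod P J \<Longrightarrow> (\<lambda>g. - u g) \<in> idealprod P J"

fun augpow :: "'a::comm_ring_1 set \<Rightarrow> nat \<Rightarrow> ('g::{finite,ab_group_add} \<Rightarrow> 'a) set" where
  "augpow A 0 = galg A"
| "augpow A (Suc n) = idealprod (augpow A n) (augI A)"

text \<open>Q_n(A,G) = I^n / I^(n+1), elements are cosets.\<close>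
definition Qcoset :: "'a::comm_ring_1 set \<Rightarrow> nat \<Rightarrow> ('g::{finite,ab_group_add} \<Rightarrow> 'a) \<Rightarrow> ('g \<Rightarrow> 'a) set" where
  "Qcoset A n x = {gadd x y | y. y \<in> augpow A (Suc n)}"

definition Qn :: "'a::comm_ring_1 set \<Rightarrow> nat \<Rightarrow> ('g::{finite,ab_group_add} \<Rightarrow> 'a) set set" where
  "Qn A n = Qcoset A n ` augpow A n"

definition Qadd :: "('g \<Rightarrow> 'a::comm_ring_1) set \<Rightarrow> ('g \<Rightarrow> 'a) set \<Rightarrow> ('g \<Rightarrow> 'a) set" where
  "Qadd X Y = {gadd x y | x y. x \<in> X \<and> y \<in> Y}"

definition Qsmul :: "'a::comm_ring_1 set \<Rightarrow> nat \<Rightarrow> 'a \<Rightarrow> ('g::{finite,ab_group_add} \<Rightarrow> 'a) set \<Rightarrow> ('g \<Rightarrow> 'a) set" where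
  "Qsmul A n c X = {gadd (gsmul c x) y | x y. x \<in> X \<and> y \<in> augpow A (Suc n)}"

text \<open>Construction: free abelian group on R \<times> M (finitely supported integer-valued
functions) modulo the subgroup generated by the bilinearity relations.\<close>

definition supp :: "('p \<Rightarrow> int) \<Rightarrow> 'p set" where
  "supp c = {p. c p \<noteq> 0}"

definition tfree :: "'r set \<Rightarrow> 'm set \<Rightarrow> ('r \<times> 'm \<Rightarrow> int) set" where
  "tfree R M = {c. finite (supp c) \<and> supp c \<subseteq> R \<times> M}"

definition delta :: "'p \<Rightarrow> 'p \<Rightarrow> int" where
  "delta p = (\<lambda>q. if q = p then 1 else 0)"

definition fadd :: "('p \<Rightarrow> int) \<Rightarrow> ('p \<Rightarrow> int) \<Rightarrow> 'p \<Rightarrow> int" where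
  "fadd c d = (\<lambda>q. c q + d q)"

definition fdiff :: "('p \<Rightarrow> int) \<Rightarrow> ('p \<Rightarrow> int) \<Rightarrow> 'p \<Rightarrow> int" where
  "fdiff c d = (\<lambda>q. c q - d q)"

inductive_set trel :: "'r::ab_group_add set \<Rightarrow> 'm set \<Rightarrow> ('m \<Rightarrow> 'm \<Rightarrow> 'm) \<Rightarrow> ('r \<times> 'm \<Rightarrow> int) set"
  for R :: "'r set" and M :: "'m set" and addM :: "'m \<Rightarrow> 'm \<Rightarrow> 'm" where
  zero: "(\<lambda>_. 0) \<in> trel R M addM"
| lin1: "r \<in> R \<Longrightarrow> r' \<in> R \<Longrightarrow> m \<in> M \<Longrightarrow>
     fdiff (delta (r + r', m)) (fadd (delta (r, m)) (delta (r', m))) \<in> trel R M addM"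
| lin2: "r \<in> R \<Longrightarrow> m \<in> M \<Longrightarrow> m' \<in> M \<Longrightarrow>
     fdiff (delta (r, addM m m')) (fadd (delta (r, m)) (delta (r, m'))) \<in> trel R M addM"
| add: "u \<in> trel R M addM \<Longrightarrow> v \<in> trel R M addM \<Longrightarrow> fadd u v \<in> trel R M addM"
| neg: "u \<in> trel R M addM \<Longrightarrow> (\<lambda>q. - u q) \<in> trel R M addM"

definition tcls :: "'r::ab_group_add set \<Rightarrow> 'm set \<Rightarrow> ('m \<Rightarrow> 'm \<Rightarrow> 'm) \<Rightarrow> ('r \<times> 'm \<Rightarrow> int) \<Rightarrow> ('r \<times> 'm \<Rightarrow> int) set" where
  "tcls R M addM c = {fadd c d | d. d \<in> trel R M addM}"

definition tens :: "'r::ab_group_add set \<Rightarrow> 'm set \<Rightarrow> ('m \<Rightarrow> 'm \<Rightarrow> 'm) \<Rightarrow> ('r \<times> 'm \<Rightarrow> int) set set" where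
  "tens R M addM = tcls R M addM ` tfree R M"

definition tadd :: "('p \<Rightarrow> int) set \<Rightarrow> ('p \<Rightarrow> int) set \<Rightarrow> ('p \<Rightarrow> int) set" where
  "tadd X Y = {fadd c d | c d. c \<in> X \<and> d \<in> Y}"

text \<open>Extension of scalars: s \<cdot> (r \<otimes> m) = (s r) \<otimes> m, extended additively.\<close>
definition tsm :: "'r::comm_ring_1 \<Rightarrow> ('r \<times> 'm \<Rightarrow> int) \<Rightarrow> 'r \<times> 'm \<Rightarrow> int" where
  "tsm s c = (\<lambda>q. \<Sum>p\<in>supp c. c p * delta (s * fst p, snd p) q)"

definition tsmul :: "'r::comm_ring_1 set \<Rightarrow> 'm set \<Rightarrow> ('m \<Rightarrow> 'm \<Rightarrow> 'm) \<Rightarrow> 'r \<Rightarrow> ('r \<times> 'm \<Rightarrow> int) set \<Rightarrow> ('r \<times> 'm \<Rightarrow> int) set" where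
  "tsmul R M addM s X = {fadd (tsm s c) d | c d. c \<in> X \<and> d \<in> trel R M addM}"

text \<open>For an element c of the free group (formal sum of c p times fst p \<otimes> snd p),
fval collects all cosets  sum_p c p * fst p * x_p + I(R,G)^(n+1)  over all choices of
representatives x_p of the cosets snd p.  Well-definedness of f means this is a single
coset independent of the representatives and of the element of the tensor class.\<close>
definition fval :: "rat set \<Rightarrow> nat \<Rightarrow> (rat \<times> ('g::{finite,ab_group_add} \<Rightarrow> int) set \<Rightarrow> int) \<Rightarrow> ('g \<Rightarrow> rat) set" where
  "fval R n c = {gadd (\<lambda>g. \<Sum>p\<in>supp c. of_int (c p) * fst p * of_int (\<rho> p g)) y | \<rho> y.
       (\<forall>p\<in>supp c. \<rho> p \<in> snd p) \<and> y \<in> augpow R (Suc n)}"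

definition Fmap :: "rat set \<Rightarrow> nat \<Rightarrow> (rat \<times> ('g::{finite,ab_group_add} \<Rightarrow> int) set \<Rightarrow> int) set \<Rightarrow> ('g \<Rightarrow> rat) set" where
  "Fmap R n X = (\<Union>c\<in>X. fval R n c)"

definition subring_rat :: "rat set \<Rightarrow> bool" where
  "subring_rat R \<longleftrightarrow> 1 \<in> R \<and> (\<forall>x\<in>R. \<forall>y\<in>R. x + y \<in> R \<and> x * y \<in> R \<and> - x \<in> R)"

end

theory Submission
  imports Defs "HOL-Library.Function_Algebras"
begin


definition sr :: "'a::comm_ring_1 set \<Rightarrow> bool" where
  "sr A \<longleftrightarrow> 1 \<in> A \<and> (\<forall>x\<in>A. \<forall>y\<in>A. x + y \<in> A \<and> x * y \<in> A \<and> - x \<in> A)"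

lemma sr_UNIV: "sr UNIV" by (simp add: sr_def)
lemma sr_rat: "subring_rat R \<Longrightarrow> sr R" by (simp add: sr_def subring_rat_def)

lemma sr_one: "sr A \<Longrightarrow> 1 \<in> A" by (simp add: sr_def)
lemma sr_add: "sr A \<Longrightarrow> x \<in> A \<Longrightarrow> y \<in> A \<Longrightarrow> x + y \<in> A" by (simp add: sr_def)
lemma sr_mult: "sr A \<Longrightarrow> x \<in> A \<Longrightarrow> y \<in> A \<Longrightarrow> x * y \<in> A" by (simp add: sr_def)
lemma sr_neg: "sr A \<Longrightarrow> x \<in> A \<Longrightarrow> - x \<in> A" by (simp add: sr_def)
lemma sr_zero: "sr A \<Longrightarrow> 0 \<in> A"
  using sr_add[of A 1 "-1"] sr_one sr_neg by fastforce
lemma sr_diff: "sr A \<Longrightarrow> x \<in> A \<Longrightarrow> y \<in> A \<Longrightarrow> x - y \<in> A"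
  using sr_add sr_neg by (metis diff_conv_add_uminus)
lemma sr_sum: "sr A \<Longrightarrow> (\<And>i. i \<in> S \<Longrightarrow> f i \<in> A) \<Longrightarrow> sum f S \<in> A"
proof (induction S rule: infinite_finite_induct)
  case (infinite S) then show ?case by (simp add: sr_zero)
next
  case empty then show ?case by (simp add: sr_zero)
next
  case (insert x F) then show ?case by (simp add: sr_add)
qed
lemma sr_of_nat: "sr A \<Longrightarrow> of_nat k \<in> A"
  by (induction k) (auto simp: sr_zero sr_one sr_add)
lemma sr_of_int: "sr A \<Longrightarrow> of_int k \<in> A"
  by (cases k rule: int_cases) (auto simp: sr_of_nat sr_neg sr_diff sr_one)

lemma gadd_eq: "gadd x y = x + y" by (simp add: gadd_def fun_eq_iff)
lemma neg_eq: "(\<lambda>g. - u g) = - u" by (simp add: fun_Compl_def)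
lemma fadd_eq: "fadd x y = x + y" by (simp add: fadd_def fun_eq_iff)
lemma fdiff_eq: "fdiff x y = x - y" by (simp add: fdiff_def fun_eq_iff)
lemma zero_eq: "(\<lambda>_. 0) = 0" by (simp add: fun_eq_iff)

lemma sum_apply: "(sum f S) x = (\<Sum>i\<in>S. f i x)"
  by (induction S rule: infinite_finite_induct) auto

lemma galg_zero: "sr A \<Longrightarrow> 0 \<in> galg A" by (simp add: galg_def sr_zero)
lemma galg_add: "sr A \<Longrightarrow> x \<in> galg A \<Longrightarrow> y \<in> galg A \<Longrightarrow> x + y \<in> galg A"
  by (simp add: galg_def sr_add)
lemma galg_neg: "sr A \<Longrightarrow> x \<in> galg A \<Longrightarrow> - x \<in> galg A"
  by (simp add: galg_def sr_neg)
lemma galg_smul: "sr A \<Longrightarrow> s \<in> A \<Longrightarrow> x \<in> galg A \<Longrightarrow> gsmul s x \<in> galg A"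
  by (simp add: galg_def gsmul_def sr_mult)
lemma galg_gmult: "sr A \<Longrightarrow> x \<in> galg A \<Longrightarrow> y \<in> galg A \<Longrightarrow> gmult x y \<in> galg A"
  unfolding galg_def gmult_def by (auto intro!: sr_sum sr_mult)

lemma idealprod_zero: "0 \<in> idealprod P J"
  using idealprod.zero zero_eq by metis
lemma idealprod_add: "u \<in> idealprod P J \<Longrightarrow> v \<in> idealprod P J \<Longrightarrow> u + v \<in> idealprod P J"
  using idealprod.add gadd_eq by metis
lemma idealprod_neg: "u \<in> idealprod P J \<Longrightarrow> - u \<in> idealprod P J"
  using idealprod.neg neg_eq by metis

lemma augpow_zero: "sr A \<Longrightarrow> 0 \<in> augpow A k"
  by (cases k) (auto simp: galg_zero idealprod_zero)
lemma augpow_add: "sr A \<Longrightarrow> x \<in> augpow A k \<Longrightarrow> y \<in> augpow A k \<Longrightarrow> x + y \<in> augpow A k"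
  by (cases k) (auto simp: galg_add idealprod_add)
lemma augpow_neg: "sr A \<Longrightarrow> x \<in> augpow A k \<Longrightarrow> - x \<in> augpow A k"
  by (cases k) (auto simp: galg_neg idealprod_neg)
lemma augpow_diff: "sr A \<Longrightarrow> x \<in> augpow A k \<Longrightarrow> y \<in> augpow A k \<Longrightarrow> x - y \<in> augpow A k"
  by (metis augpow_add augpow_neg diff_conv_add_uminus)
lemma augpow_sum: "sr A \<Longrightarrow> (\<And>i. i \<in> S \<Longrightarrow> f i \<in> augpow A k) \<Longrightarrow> sum f S \<in> augpow A k"
proof (induction S rule: infinite_finite_induct)
  case (infinite S) then show ?case by (metis sum.infinite augpow_zero)
next
  case empty then show ?case by (metis sum.empty augpow_zero)
next
  case (insert x F) then show ?case by (metis sum.insert augpow_add insertI1 insertI2)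
qed

lemma gsmul_gmult: "gsmul s (gmult x y) = gmult (gsmul s x) y"
  by (simp add: gsmul_def gmult_def fun_eq_iff sum_distrib_left mult.assoc)

lemma idealprod_smul:
  assumes "u \<in> idealprod P J" "\<And>x. x \<in> P \<Longrightarrow> gsmul s x \<in> P"
  shows "gsmul s u \<in> idealprod P J"
  using assms(1)
proof induction
  case zero then show ?case by (simp add: gsmul_def idealprod.zero)
next
  case (prod x y) then show ?case by (simp add: gsmul_gmult assms(2) idealprod.prod)
next
  case (add u v)
  have "gsmul s (gadd u v) = gadd (gsmul s u) (gsmul s v)"
    by (simp add: gsmul_def gadd_def fun_eq_iff distrib_left)
  then show ?case using add by (simp add: idealprod.add)
next
  case (neg u)
  have "gsmul s (\<lambda>g. - u g) = (\<lambda>g. - gsmul s u g)" by (simp add: gsmul_def)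
  then show ?case using neg by (simp add: idealprod.neg)
qed

lemma augpow_smul: "sr A \<Longrightarrow> s \<in> A \<Longrightarrow> x \<in> augpow A k \<Longrightarrow> gsmul s x \<in> augpow A k"
proof (induction k arbitrary: x)
  case 0 then show ?case by (simp add: galg_smul)
next
  case (Suc k) then show ?case by (auto intro: idealprod_smul)
qed

lemma idealprod_mono: "u \<in> idealprod P J \<Longrightarrow> P \<subseteq> P' \<Longrightarrow> u \<in> idealprod P' J"
  by (induction rule: idealprod.induct) (auto intro: idealprod.intros)

lemma augI_galg: "augI A \<subseteq> galg A" by (auto simp: augI_def)

lemma augpow_Suc_subset: "sr A \<Longrightarrow> augpow A (Suc k) \<subseteq> augpow A k"
proof (induction k)
  case 0
  have "u \<in> galg A" if "u \<in> idealprod (galg A) (augI A)" for u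
    using that
  proof induction
    case zero then show ?case using galg_zero[OF 0] zero_eq by metis
  next
    case (prod x y) then show ?case using galg_gmult[OF 0] augI_galg by blast
  next
    case (add u v) then show ?case using galg_add[OF 0] gadd_eq by metis
  next
    case (neg u) then show ?case using galg_neg[OF 0] neg_eq by metis
  qed
  then show ?case by auto
next
  case (Suc k) then show ?case by (auto intro: idealprod_mono)
qed



definition emb :: "('g \<Rightarrow> int) \<Rightarrow> 'g \<Rightarrow> 'a::comm_ring_1" where
  "emb x = (\<lambda>g. of_int (x g))"

lemma gmult_emb: "gmult (emb x) (emb y) = emb (gmult x y)"
  by (simp add: gmult_def emb_def fun_eq_iff)
lemma aug_emb: "aug (emb y) = of_int (aug y)"
  by (simp add: aug_def emb_def)
lemma emb_add: "emb (x + y) = emb x + emb y" by (simp add: emb_def fun_eq_iff)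
lemma emb_neg: "emb (- x) = - emb x" by (simp add: emb_def fun_eq_iff)
lemma emb_diff: "emb (x - y) = emb x - emb y" by (simp add: emb_def fun_eq_iff)
lemma emb_zero: "emb 0 = 0" by (simp add: emb_def fun_eq_iff)
lemma emb_gsmul: "emb (gsmul a x) = gsmul (of_int a) (emb x)"
  by (simp add: emb_def gsmul_def fun_eq_iff)

lemma augpow_emb: "sr A \<Longrightarrow> x \<in> augpow UNIV k \<Longrightarrow> (emb x :: 'g::{finite,ab_group_add} \<Rightarrow> 'a::comm_ring_1) \<in> augpow A k"
proof (induction k arbitrary: x)
  case 0 then show ?case by (simp add: galg_def emb_def sr_of_int)
next
  case (Suc k)
  from Suc.prems(2) have "x \<in> idealprod (augpow UNIV k) (augI UNIV)" by simp
  then show ?case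
  proof induction
    case zero
    have e: "emb (\<lambda>_. 0) = (\<lambda>_. (0::'a))" by (simp add: emb_def)
    show ?case unfolding e augpow.simps by (rule idealprod.zero)
  next
    case (prod x y)
    have "aug (emb y :: 'g \<Rightarrow> 'a) = 0" using prod(2) by (simp add: aug_emb augI_def)
    then have hy: "(emb y :: 'g \<Rightarrow> 'a) \<in> augI A" using Suc.prems(1)
      by (simp add: augI_def galg_def emb_def sr_of_int)
    have hx: "(emb x :: 'g \<Rightarrow> 'a) \<in> augpow A k" using Suc.IH Suc.prems(1) prod(1) by blast
    show ?case unfolding augpow.simps gmult_emb[symmetric] by (rule idealprod.prod[OF hx hy])
  next
    case (add u v)
    have e: "emb (gadd u v) = gadd (emb u) (emb v :: 'g \<Rightarrow> 'a)" by (simp add: gadd_def emb_def fun_eq_iff)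
    show ?case unfolding e augpow.simps by (rule idealprod.add) (use add in auto)
  next
    case (neg u)
    have e: "emb (\<lambda>g. - u g) = (\<lambda>g. - (emb u :: 'g \<Rightarrow> 'a) g)" by (simp add: emb_def fun_eq_iff)
    show ?case unfolding e augpow.simps by (rule idealprod.neg) (use neg in auto)
  qed
qed

lemma den:
  assumes "sr R" "(r::rat) \<in> R"
  shows "\<exists>b::int. b > 0 \<and> 1 / of_int b \<in> R \<and> (\<exists>a. of_int b * r = of_int a)"
proof -
  obtain a b where q: "quotient_of r = (a, b)" by (cases "quotient_of r")
  have bpos: "b > 0" using q quotient_of_denom_pos by blast
  have cop: "coprime a b" using q quotient_of_coprime by blast
  have rdef: "r = of_int a / of_int b" using q quotient_of_div by blast
  obtain u v where uv: "u * a + v * b = 1"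
    using cop by (metis bezout_int coprime_imp_gcd_eq_1)
  have "1 / of_int b = of_int u * r + (of_int v :: rat)"
  proof -
    have "of_int u * r + (of_int v :: rat) = (of_int u * of_int a + of_int v * of_int b) / of_int b"
      using bpos by (simp add: rdef field_simps)
    also have "\<dots> = 1 / of_int b" using uv by (metis of_int_1 of_int_add of_int_mult)
    finally show ?thesis by simp
  qed
  also have "\<dots> \<in> R" using assms by (simp add: sr_add sr_mult sr_of_int)
  finally have "1 / of_int b \<in> R" .
  moreover have "of_int b * r = of_int a" using bpos by (simp add: rdef)
  ultimately show ?thesis using bpos by blast
qed

lemma den_set:
  assumes "sr R" "finite S" "\<And>g. g \<in> S \<Longrightarrow> (y g :: rat) \<in> R"
  shows "\<exists>e::int. e > 0 \<and> 1 / of_int e \<in> R \<and> (\<forall>g\<in>S. \<exists>a. of_int e * y g = of_int a)"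
  using assms(2,3)
proof (induction S rule: finite_induct)
  case empty then show ?case using assms(1) sr_one by (intro exI[of _ 1]) auto
next
  case (insert x F)
  then obtain e where e: "e > 0" "1 / of_int e \<in> R" "\<forall>g\<in>F. \<exists>a. of_int e * y g = of_int a" by auto
  obtain b a where b: "b > 0" "1 / of_int b \<in> R" "of_int b * y x = of_int a"
    using den[OF assms(1), of "y x"] insert by auto
  have "1 / of_int (e * b) = (1 / of_int e) * (1 / (of_int b :: rat))" by simp
  then have "1 / of_int (e * b) \<in> R" using e b assms(1) sr_mult by metis
  moreover have "\<forall>g\<in>insert x F. \<exists>a. of_int (e * b) * y g = of_int a"
  proof
    fix g assume "g \<in> insert x F"
    then show "\<exists>a. of_int (e * b) * y g = of_int a"
    proof
      assume "g = x" then show ?thesis using b(3) by (intro exI[of _ "e * a"]) (simp add: mult.assoc)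
    next
      assume "g \<in> F" then obtain a' where "of_int e * y g = of_int a'" using e by auto
      then show ?thesis by (intro exI[of _ "b * a'"]) (simp add: mult.commute mult.left_commute)
    qed
  qed
  ultimately show ?case using e b by (intro exI[of _ "e * b"]) auto
qed

lemma den_fun:
  assumes "sr R" "\<And>g. (y g :: rat) \<in> R"
  shows "\<exists>e::int. e > 0 \<and> 1 / of_int e \<in> R \<and> (\<exists>w. gsmul (of_int e) y = (emb w :: 'g::finite \<Rightarrow> rat))"
proof -
  obtain e where e: "e > 0" "1 / of_int e \<in> R" "\<forall>g\<in>(UNIV::'g set). \<exists>a. of_int e * y g = of_int a"
    using den_set[OF assms(1), of UNIV y] assms(2) by auto
  then have "\<forall>g. \<exists>a. of_int e * y g = of_int a" by auto
  then obtain w where "\<forall>g. of_int e * y g = of_int (w g)" by metis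
  then have "gsmul (of_int e) y = emb w" by (simp add: gsmul_def emb_def fun_eq_iff)
  then show ?thesis using e by blast
qed

lemma gsmul_gmult2: "gsmul (a * b) (gmult x y) = gmult (gsmul a x) (gsmul b y)"
  by (simp add: gsmul_def gmult_def fun_eq_iff sum_distrib_left mult_ac)

lemma span:
  assumes "sr R" "y \<in> augpow R k"
  shows "\<exists>e::int. e > 0 \<and> 1 / of_int e \<in> R \<and>
     (\<exists>w\<in>augpow UNIV k. gsmul (of_int e) y = (emb w :: 'g::{finite,ab_group_add} \<Rightarrow> rat))"
  using assms(2)
proof (induction k arbitrary: y)
  case 0
  then obtain e w where "e > 0" "1 / of_int e \<in> R" "gsmul (of_int e) y = (emb w :: 'g \<Rightarrow> rat)"
    using den_fun[OF assms(1), of y] by (auto simp: galg_def)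
  then show ?case by (auto simp: galg_def)
next
  case (Suc k)
  from Suc.prems have "y \<in> idealprod (augpow R k) (augI R)" by simp
  then show ?case
  proof induction
    case zero
    have "gsmul (of_int 1) (\<lambda>_. 0) = (emb 0 :: 'g \<Rightarrow> rat)" by (simp add: gsmul_def emb_def fun_eq_iff)
    then show ?case using assms(1) augpow_zero[OF sr_UNIV] sr_one
      by (intro exI[of _ 1]) (auto intro!: bexI[of _ 0] idealprod_zero)
  next
    case (prod x y)
    obtain e1 w1 where 1: "e1 > 0" "1 / of_int e1 \<in> R" "w1 \<in> augpow UNIV k" "gsmul (of_int e1) x = (emb w1 :: 'g \<Rightarrow> rat)"
      using Suc.IH prod(1) by blast
    obtain e2 w2 where 2: "e2 > 0" "1 / of_int e2 \<in> R" "gsmul (of_int e2) y = (emb w2 :: 'g \<Rightarrow> rat)"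
      using den_fun[OF assms(1), of y] prod(2) by (auto simp: augI_def galg_def)
    have "aug y = 0" using prod(2) by (simp add: augI_def)
    moreover have "aug (gsmul (of_int e2) y) = of_int e2 * aug y"
      by (simp add: aug_def gsmul_def sum_distrib_left)
    ultimately have "aug (emb w2 :: 'g \<Rightarrow> rat) = 0" using 2(3) by simp
    then have "of_int (aug w2) = (0::rat)" by (simp add: aug_emb)
    then have "w2 \<in> augI UNIV" by (simp add: augI_def galg_def)
    then have "gmult w1 w2 \<in> augpow UNIV (Suc k)" using 1(3) by (simp add: idealprod.prod)
    moreover have "gsmul (of_int (e1 * e2)) (gmult x y) = (emb (gmult w1 w2) :: 'g \<Rightarrow> rat)"
      using 1(4) 2(3) by (simp add: gsmul_gmult2 gmult_emb)
    moreover have "1 / of_int (e1 * e2) = (1 / of_int e1) * (1 / (of_int e2 :: rat))" by simp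
    then have "1 / of_int (e1 * e2) \<in> R" using 1 2 assms(1) sr_mult by metis
    ultimately show ?case using 1 2 by (intro exI[of _ "e1 * e2"]) auto
  next
    case (add u v)
    obtain e1 w1 where 1: "e1 > 0" "1 / of_int e1 \<in> R" "w1 \<in> augpow UNIV (Suc k)" "gsmul (of_int e1) u = (emb w1 :: 'g \<Rightarrow> rat)"
      using add by blast
    obtain e2 w2 where 2: "e2 > 0" "1 / of_int e2 \<in> R" "w2 \<in> augpow UNIV (Suc k)" "gsmul (of_int e2) v = (emb w2 :: 'g \<Rightarrow> rat)"
      using add by blast
    have "gsmul e2 w1 + gsmul e1 w2 \<in> augpow UNIV (Suc k)"
      using 1(3) 2(3) by (simp add: augpow_add augpow_smul sr_UNIV del: augpow.simps)
    moreover have "gsmul (of_int (e1 * e2)) (gadd u v) = (emb (gsmul e2 w1 + gsmul e1 w2) :: 'g \<Rightarrow> rat)"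
    proof -
      have "\<And>g. of_int e1 * u g = of_int (w1 g)" "\<And>g. of_int e2 * v g = (of_int (w2 g) :: rat)"
        using 1(4) 2(4) by (auto simp: gsmul_def emb_def fun_eq_iff)
      moreover have "\<And>g. of_int (e1*e2) * (u g + v g) = of_int e2 * (of_int e1 * u g) + of_int e1 * (of_int e2 * (v g :: rat))"
        by (simp add: algebra_simps)
      ultimately show ?thesis
        by (simp add: gsmul_def emb_def gadd_def fun_eq_iff)
    qed
    moreover have "1 / of_int (e1 * e2) = (1 / of_int e1) * (1 / (of_int e2 :: rat))" by simp
    then have "1 / of_int (e1 * e2) \<in> R" using 1 2 assms(1) sr_mult by metis
    ultimately show ?case using 1 2 by (intro exI[of _ "e1 * e2"]) auto
  next
    case (neg u)
    obtain e1 w1 where 1: "e1 > 0" "1 / of_int e1 \<in> R" "w1 \<in> augpow UNIV (Suc k)" "gsmul (of_int e1) u = (emb w1 :: 'g \<Rightarrow> rat)"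
      using neg by blast
    have "- w1 \<in> augpow UNIV (Suc k)" using 1(3) augpow_neg[OF sr_UNIV] by blast
    moreover have "gsmul (of_int e1) (\<lambda>g. - u g) = (emb (- w1) :: 'g \<Rightarrow> rat)"
      using 1(4) by (auto simp: gsmul_def emb_def fun_eq_iff)
    ultimately show ?case using 1 by blast
  qed
qed



lemma Qcoset_mem: "sr A \<Longrightarrow> z \<in> Qcoset A n x \<longleftrightarrow> z - x \<in> augpow A (Suc n)"
proof
  assume "z \<in> Qcoset A n x"
  then obtain y where "z = x + y" "y \<in> augpow A (Suc n)" by (auto simp: Qcoset_def gadd_eq)
  then show "z - x \<in> augpow A (Suc n)" by simp
next
  assume "z - x \<in> augpow A (Suc n)"
  moreover have "z = gadd x (z - x)" by (simp add: gadd_eq)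
  ultimately show "z \<in> Qcoset A n x" unfolding Qcoset_def by blast
qed

lemma Qcoset_self: "sr A \<Longrightarrow> x \<in> Qcoset A n x"
  using Qcoset_mem augpow_zero by (metis diff_self)

lemma Qcoset_eq: "sr A \<Longrightarrow> Qcoset A n x = Qcoset A n x' \<longleftrightarrow> x - x' \<in> augpow A (Suc n)"
proof
  assume "sr A" "Qcoset A n x = Qcoset A n x'"
  then show "x - x' \<in> augpow A (Suc n)" using Qcoset_self Qcoset_mem by metis
next
  assume a: "sr A" "x - x' \<in> augpow A (Suc n)"
  have "z - x \<in> augpow A (Suc n) \<longleftrightarrow> z - x' \<in> augpow A (Suc n)" for z
  proof
    assume "z - x \<in> augpow A (Suc n)"
    then have "(z - x) + (x - x') \<in> augpow A (Suc n)" using a augpow_add by blast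
    then show "z - x' \<in> augpow A (Suc n)" by simp
  next
    assume "z - x' \<in> augpow A (Suc n)"
    then have "(z - x') - (x - x') \<in> augpow A (Suc n)" using a augpow_diff by blast
    then show "z - x \<in> augpow A (Suc n)" by simp
  qed
  then show "Qcoset A n x = Qcoset A n x'" using Qcoset_mem[OF a(1)] by blast
qed

lemma Qadd_Qcoset: "sr A \<Longrightarrow> Qadd (Qcoset A n x) (Qcoset A n x') = Qcoset A n (x + x')"
proof (intro set_eqI iffI)
  fix z assume a: "sr A" "z \<in> Qadd (Qcoset A n x) (Qcoset A n x')"
  then obtain u v where "z = u + v" "u \<in> Qcoset A n x" "v \<in> Qcoset A n x'"
    by (auto simp: Qadd_def gadd_eq)
  then have "u - x \<in> augpow A (Suc n)" "v - x' \<in> augpow A (Suc n)"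
    using a(1) Qcoset_mem by blast+
  then have "(u - x) + (v - x') \<in> augpow A (Suc n)" using a(1) augpow_add by blast
  moreover have "z - (x + x') = (u - x) + (v - x')" using \<open>z = u + v\<close> by (simp add: add_diff_add)
  ultimately have "z - (x + x') \<in> augpow A (Suc n)" by metis
  then show "z \<in> Qcoset A n (x + x')" using Qcoset_mem[OF a(1)] by blast
next
  fix z assume a: "sr A" "z \<in> Qcoset A n (x + x')"
  have "z - (x + x') \<in> augpow A (Suc n)" using a Qcoset_mem by blast
  moreover have "z - (x + x') = (z - x') - x" by (simp add: algebra_simps)
  ultimately have "(z - x') - x \<in> augpow A (Suc n)" by metis
  then have "z - x' \<in> Qcoset A n x" using Qcoset_mem[OF a(1)] by blast
  moreover have "x' \<in> Qcoset A n x'" using a Qcoset_self by blast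
  moreover have "z = gadd (z - x') x'" by (simp add: gadd_eq)
  ultimately show "z \<in> Qadd (Qcoset A n x) (Qcoset A n x')" unfolding Qadd_def by blast
qed

lemma gsmul_diff: "gsmul s (x - y) = gsmul s x - gsmul s y"
  by (simp add: gsmul_def fun_eq_iff algebra_simps)
lemma gsmul_add: "gsmul s (x + y) = gsmul s x + gsmul s y"
  by (simp add: gsmul_def fun_eq_iff algebra_simps)
lemma gsmul_neg: "gsmul s (- x) = - gsmul s x"
  by (simp add: gsmul_def fun_eq_iff algebra_simps)
lemma gsmul_zero: "gsmul s 0 = 0"
  by (simp add: gsmul_def fun_eq_iff)
lemma gsmul_gsmul: "gsmul s (gsmul t x) = gsmul (s * t) x"
  by (simp add: gsmul_def fun_eq_iff algebra_simps)
lemma gsmul_one: "gsmul 1 x = x"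
  by (simp add: gsmul_def fun_eq_iff)
lemma gsmul_sum: "gsmul s (sum f S) = (\<Sum>i\<in>S. gsmul s (f i))"
  by (simp add: gsmul_def fun_eq_iff sum_apply sum_distrib_left)

lemma Qsmul_Qcoset:
  assumes "sr A" "s \<in> A"
  shows "Qsmul A n s (Qcoset A n x) = Qcoset A n (gsmul s x)"
proof (intro set_eqI iffI)
  fix z assume "z \<in> Qsmul A n s (Qcoset A n x)"
  then obtain u y where u: "z = gsmul s u + y" "u \<in> Qcoset A n x" "y \<in> augpow A (Suc n)"
    by (auto simp: Qsmul_def gadd_eq)
  then have "u - x \<in> augpow A (Suc n)" using assms Qcoset_mem by blast
  then have "gsmul s (u - x) + y \<in> augpow A (Suc n)"
    using assms augpow_add augpow_smul u(3) by blast
  moreover have "z - gsmul s x = gsmul s (u - x) + y" using u by (simp add: gsmul_diff)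
  ultimately have "z - gsmul s x \<in> augpow A (Suc n)" by metis
  then show "z \<in> Qcoset A n (gsmul s x)" using Qcoset_mem[OF assms(1)] by blast
next
  fix z assume "z \<in> Qcoset A n (gsmul s x)"
  then have "z - gsmul s x \<in> augpow A (Suc n)" using Qcoset_mem assms by blast
  moreover have "z = gadd (gsmul s x) (z - gsmul s x)" by (simp add: gadd_eq)
  ultimately show "z \<in> Qsmul A n s (Qcoset A n x)"
    unfolding Qsmul_def using Qcoset_self[OF assms(1)] by blast
qed

definition L :: "('p \<Rightarrow> 'x \<Rightarrow> 'b::comm_ring_1) \<Rightarrow> ('p \<Rightarrow> int) \<Rightarrow> 'x \<Rightarrow> 'b" where
  "L f c = (\<Sum>p\<in>supp c. gsmul (of_int (c p)) (f p))"

definition fin :: "('p \<Rightarrow> int) \<Rightarrow> bool" where "fin c \<longleftrightarrow> finite (supp c)"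

lemma L_superset: "finite S \<Longrightarrow> supp c \<subseteq> S \<Longrightarrow> L f c = (\<Sum>p\<in>S. gsmul (of_int (c p)) (f p))"
  unfolding L_def
  by (rule sum.mono_neutral_left) (auto simp: supp_def gsmul_def fun_eq_iff)

lemma supp_add: "supp (c + d) \<subseteq> supp c \<union> supp d" by (auto simp: supp_def)
lemma supp_neg: "supp (- c) = supp c" by (auto simp: supp_def)
lemma supp_gsmul: "supp (gsmul k c) \<subseteq> supp c" by (auto simp: supp_def gsmul_def)
lemma supp_delta: "supp (delta p) = {p}" by (auto simp: supp_def delta_def)
lemma supp_zero: "supp 0 = {}" by (auto simp: supp_def)

lemma fin_add: "fin c \<Longrightarrow> fin d \<Longrightarrow> fin (c + d)"
  unfolding fin_def using supp_add finite_subset by (metis finite_UnI)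
lemma fin_neg: "fin c \<Longrightarrow> fin (- c)" by (simp add: fin_def supp_neg)
lemma fin_diff: "fin c \<Longrightarrow> fin d \<Longrightarrow> fin (c - d)"
  by (metis diff_conv_add_uminus fin_add fin_neg)
lemma fin_gsmul: "fin c \<Longrightarrow> fin (gsmul k c)" unfolding fin_def using supp_gsmul finite_subset by metis
lemma fin_delta: "fin (delta p)" by (simp add: fin_def supp_delta)
lemma fin_zero: "fin 0" by (simp add: fin_def supp_zero)
lemma fin_sum: "(\<And>i. i \<in> S \<Longrightarrow> fin (f i)) \<Longrightarrow> fin (sum f S)"
  by (induction S rule: infinite_finite_induct) (auto simp: fin_zero fin_add)

lemma L_add: "fin c \<Longrightarrow> fin d \<Longrightarrow> L f (c + d) = L f c + L f d"
proof -
  assume a: "fin c" "fin d"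
  let ?S = "supp c \<union> supp d"
  have fS: "finite ?S" using a by (simp add: fin_def)
  have "L f (c + d) = (\<Sum>p\<in>?S. gsmul (of_int ((c + d) p)) (f p))"
    using L_superset[OF fS supp_add] .
  also have "\<dots> = (\<Sum>p\<in>?S. gsmul (of_int (c p)) (f p) + gsmul (of_int (d p)) (f p))"
    by (intro sum.cong) (auto simp: gsmul_def fun_eq_iff algebra_simps)
  also have "\<dots> = L f c + L f d"
    by (simp add: sum.distrib L_superset[OF fS] )
  finally show ?thesis .
qed

lemma L_gsmul: "fin c \<Longrightarrow> L f (gsmul k c) = gsmul (of_int k) (L f c)"
proof -
  assume a: "fin c"
  have fS: "finite (supp c)" using a by (simp add: fin_def)
  have "L f (gsmul k c) = (\<Sum>p\<in>supp c. gsmul (of_int (gsmul k c p)) (f p))"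
    using L_superset[OF fS supp_gsmul] .
  also have "\<dots> = (\<Sum>p\<in>supp c. gsmul (of_int k) (gsmul (of_int (c p)) (f p)))"
    by (intro sum.cong) (auto simp: gsmul_def fun_eq_iff algebra_simps)
  finally show ?thesis by (simp add: gsmul_sum L_def)
qed

lemma L_neg: "L f (- c) = - L f c"
  by (simp add: L_def supp_neg gsmul_def fun_eq_iff sum_apply sum_negf[symmetric])

lemma L_diff: "fin c \<Longrightarrow> fin d \<Longrightarrow> L f (c - d) = L f c - L f d"
  by (metis L_add L_neg diff_conv_add_uminus fin_neg)

lemma L_zero: "L f 0 = 0" by (simp add: L_def supp_zero)

lemma L_delta: "L f (delta p) = f p"
  unfolding L_def supp_delta by (simp add: delta_def gsmul_one)

lemma L_sum: "(\<And>i. i \<in> S \<Longrightarrow> fin (g i)) \<Longrightarrow> L f (sum g S) = (\<Sum>i\<in>S. L f (g i))"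
proof (induction S rule: infinite_finite_induct)
  case (infinite S) then show ?case by (metis sum.infinite L_zero)
next
  case empty then show ?case by (metis sum.empty L_zero)
next
  case (insert x F)
  have "L f (sum g (insert x F)) = L f (g x) + L f (sum g F)"
    using insert by (metis L_add fin_sum insertCI sum.insert)
  also have "L f (sum g F) = (\<Sum>i\<in>F. L f (g i))" using insert.IH insert.prems by blast
  also have "L f (g x) + (\<Sum>i\<in>F. L f (g i)) = (\<Sum>i\<in>insert x F. L f (g i))"
    using insert(1,2) by (rule sum.insert[symmetric])
  finally show ?case .
qed

lemma L_comp: "fin c \<Longrightarrow> (\<And>p. fin (h p)) \<Longrightarrow> L f (L h c) = L (\<lambda>p. L f (h p)) c"
  unfolding L_def[of h c] L_def[of "\<lambda>p. L f (h p)" c]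
  by (subst L_sum) (auto simp: fin_gsmul L_gsmul)

lemma L_self: "fin c \<Longrightarrow> L delta c = c"
proof -
  assume fc: "fin c"
  have "(\<Sum>i\<in>supp c. c i * delta i q) = c q" for q
  proof -
    have "(\<Sum>i\<in>supp c. c i * delta i q) = (\<Sum>i\<in>supp c. if q = i then c i else 0)"
      by (intro sum.cong) (auto simp: delta_def)
    also have "\<dots> = c q" using fc by (simp add: sum.delta fin_def) (simp add: supp_def)
    finally show ?thesis .
  qed
  then show ?thesis by (simp add: L_def fun_eq_iff sum_apply gsmul_def)
qed



abbreviation MZ :: "nat \<Rightarrow> ('g::{finite,ab_group_add} \<Rightarrow> int) set set" where
  "MZ n \<equiv> Qn UNIV n"

definition rep :: "'x set \<Rightarrow> 'x" where "rep m = (SOME z. z \<in> m)"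

definition W :: "rat \<times> ('g \<Rightarrow> int) set \<Rightarrow> 'g \<Rightarrow> rat" where
  "W p = gsmul (fst p) (emb (rep (snd p)))"

definition V :: "(rat \<times> ('g \<Rightarrow> int) set \<Rightarrow> int) \<Rightarrow> 'g \<Rightarrow> rat" where
  "V c = L W c"

lemma MZ_iff: "m \<in> MZ n \<longleftrightarrow> (\<exists>x\<in>augpow UNIV n. m = Qcoset UNIV n x)"
  by (auto simp: Qn_def)

lemma rep_mem: "z \<in> m \<Longrightarrow> rep m \<in> m"
  unfolding rep_def by (rule someI)

lemma rep_Qc: "rep (Qcoset UNIV n x) - x \<in> augpow UNIV (Suc n)"
  using rep_mem[OF Qcoset_self[OF sr_UNIV]] Qcoset_mem[OF sr_UNIV] by blast

lemma rep_in: "x \<in> augpow UNIV n \<Longrightarrow> rep (Qcoset UNIV n x) \<in> augpow UNIV n"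
proof -
  assume x: "x \<in> augpow UNIV n"
  have "rep (Qcoset UNIV n x) - x \<in> augpow UNIV n"
    using rep_Qc augpow_Suc_subset[OF sr_UNIV] by blast
  then have "(rep (Qcoset UNIV n x) - x) + x \<in> augpow UNIV n" using x augpow_add[OF sr_UNIV] by blast
  then show ?thesis by simp
qed

lemma MZ_add: "m \<in> MZ n \<Longrightarrow> m' \<in> MZ n \<Longrightarrow> Qadd m m' \<in> (MZ n :: ('g::{finite,ab_group_add} \<Rightarrow> int) set set)"
  unfolding MZ_iff using Qadd_Qcoset[OF sr_UNIV] augpow_add[OF sr_UNIV] by metis

lemma MZ_Qc: "x \<in> augpow UNIV n \<Longrightarrow> Qcoset UNIV n x \<in> MZ n"
  unfolding MZ_iff by blast

locale ctx =
  fixes R :: "rat set" and n :: nat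
  assumes sR: "sr R"
begin

abbreviation TR :: "(rat \<times> ('g::{finite,ab_group_add} \<Rightarrow> int) set \<Rightarrow> int) set" where
  "TR \<equiv> trel R (MZ n) Qadd"

lemma trel_zero: "0 \<in> TR" unfolding zero_fun_def by (rule trel.zero)
lemma trel_add: "u \<in> TR \<Longrightarrow> v \<in> TR \<Longrightarrow> u + v \<in> TR" unfolding fadd_eq[symmetric] by (rule trel.add)
lemma trel_neg: "u \<in> TR \<Longrightarrow> - u \<in> TR" unfolding neg_eq[symmetric] by (rule trel.neg)
lemma trel_diff: "u \<in> TR \<Longrightarrow> v \<in> TR \<Longrightarrow> u - v \<in> TR"
  unfolding diff_conv_add_uminus by (intro trel_add trel_neg)
lemma trel_gsmul_nat: "u \<in> TR \<Longrightarrow> gsmul (int k) u \<in> TR"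
proof (induction k)
  case 0 then show ?case using trel_zero by (simp add: gsmul_def zero_fun_def)
next
  case (Suc k)
  have eq: "gsmul (int (Suc k)) u = gsmul (int k) u + u" by (simp add: gsmul_def fun_eq_iff algebra_simps)
  have "gsmul (int k) u \<in> TR" using Suc by blast
  then have "gsmul (int k) u + u \<in> TR" using trel_add Suc.prems by blast
  then show ?case unfolding eq .
qed
lemma trel_gsmul:
  assumes u: "u \<in> TR" shows "gsmul k u \<in> TR"
proof (cases k rule: int_cases2)
  case (nonneg m) then show ?thesis using trel_gsmul_nat[OF u] by blast
next
  case (nonpos m)
  have eq: "gsmul k u = - gsmul (int m) u" using nonpos by (simp add: gsmul_def fun_eq_iff)
  show ?thesis unfolding eq by (rule trel_neg[OF trel_gsmul_nat[OF u]])
qed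

lemma supp3: "supp (fdiff (delta a) (fadd (delta b) (delta c))) \<subseteq> {a, b, c}"
proof
  fix p assume p: "p \<in> supp (fdiff (delta a) (fadd (delta b) (delta c)))"
  show "p \<in> {a, b, c}"
  proof (rule ccontr)
    assume "p \<notin> {a, b, c}"
    then have "p \<noteq> a" "p \<noteq> b" "p \<noteq> c" by auto
    then have "fdiff (delta a) (fadd (delta b) (delta c)) p = 0"
      by (simp add: fdiff_def fadd_def delta_def)
    then show False using p by (simp add: supp_def)
  qed
qed

lemma trel_tfree: "u \<in> TR \<Longrightarrow> fin u \<and> supp u \<subseteq> R \<times> MZ n"
proof (induction rule: trel.induct)
  case zero then show ?case by (simp add: fin_def supp_def)
next
  case (lin1 r r' m)
  have rr: "r + r' \<in> R" by (rule sr_add[OF sR lin1(1) lin1(2)])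
  have S: "{(r + r', m), (r, m), (r', m)} \<subseteq> R \<times> MZ n" using lin1(1,2,3) rr by (simp only: insert_subset mem_Sigma_iff empty_subsetI simp_thms)
  have F: "finite {(r + r', m), (r, m), (r', m)}" by simp
  show ?case unfolding fin_def using finite_subset[OF supp3 F] subset_trans[OF supp3 S] by (intro conjI)
next
  case (lin2 r m m')
  have "Qadd m m' \<in> MZ n" using lin2(2,3) by (rule MZ_add)
  then have S: "{(r, Qadd m m'), (r, m), (r, m')} \<subseteq> R \<times> MZ n" using lin2(1,2,3) by (simp only: insert_subset mem_Sigma_iff empty_subsetI simp_thms)
  have F: "finite {(r, Qadd m m'), (r, m), (r, m')}" by simp
  show ?case unfolding fin_def using finite_subset[OF supp3 F] subset_trans[OF supp3 S] by (intro conjI)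
next
  case (add u v)
  have hu: "fin u" "supp u \<subseteq> R \<times> MZ n" using add.IH(1) by (rule conjunct1, rule conjunct2)
  have hv: "fin v" "supp v \<subseteq> R \<times> MZ n" using add.IH(2) by (rule conjunct1, rule conjunct2)
  have "fin (u + v)" using hu hv by (intro fin_add)
  moreover have "supp (u + v) \<subseteq> R \<times> MZ n" using hu(2) hv(2) supp_add[of u v] by (meson Un_least subset_trans)
  ultimately show ?case unfolding fadd_eq by (intro conjI)
next
  case (neg u)
  have hu: "fin u" using neg.IH by (rule conjunct1)
  have hu2: "supp u \<subseteq> R \<times> MZ n" using neg.IH by (rule conjunct2)
  have "fin (- u)" using hu by (rule fin_neg)
  moreover have "supp (- u) \<subseteq> R \<times> MZ n" unfolding supp_neg by (rule hu2)
  ultimately have "fin (- u) \<and> supp (- u) \<subseteq> R \<times> MZ n" by (rule conjI)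
  moreover have e: "(\<lambda>q. - u q) = - u" by (simp add: fun_Compl_def)
  ultimately show ?case by (simp only: e)
qed

lemma trel_fin: "u \<in> TR \<Longrightarrow> fin u" using trel_tfree by blast

definition eqv :: "(rat \<times> ('g::{finite,ab_group_add} \<Rightarrow> int) set \<Rightarrow> int) \<Rightarrow> _ \<Rightarrow> bool" where
  "eqv c d \<longleftrightarrow> c - d \<in> TR"

lemma eqv_refl: "eqv c c" by (simp add: eqv_def trel_zero)
lemma eqv_sym: assumes "eqv c d" shows "eqv d c"
proof -
  have eq: "d - c = - (c - d)" by simp
  show ?thesis unfolding eqv_def eq using assms unfolding eqv_def by (rule trel_neg)
qed
lemma eqv_trans: assumes "eqv a b" "eqv b c" shows "eqv a c"
proof -
  have eq: "a - c = (a - b) + (b - c)" by simp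
  show ?thesis unfolding eqv_def eq using assms unfolding eqv_def by (rule trel_add)
qed
lemma eqv_add: assumes "eqv a b" "eqv c d" shows "eqv (a + c) (b + d)"
proof -
  have eq: "(a + c) - (b + d) = (a - b) + (c - d)" by simp
  show ?thesis unfolding eqv_def eq using assms unfolding eqv_def by (rule trel_add)
qed
lemma eqv_neg: assumes "eqv a b" shows "eqv (- a) (- b)"
proof -
  have eq: "(- a) - (- b) = - (a - b)" by simp
  show ?thesis unfolding eqv_def eq using assms unfolding eqv_def by (rule trel_neg)
qed
lemma eqv_gsmul: "eqv a b \<Longrightarrow> eqv (gsmul k a) (gsmul k b)"
  unfolding eqv_def gsmul_diff[symmetric] by (rule trel_gsmul)
lemma eqv_zero_iff: "eqv c 0 \<longleftrightarrow> c \<in> TR" by (simp add: eqv_def)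

end



declare augpow.simps(2)[simp del]

lemma V_delta: "V (delta p) = W p" by (simp add: V_def L_delta)
lemma V_add: "fin c \<Longrightarrow> fin d \<Longrightarrow> V (c + d) = V c + V d" by (simp add: V_def L_add)
lemma V_diff: "fin c \<Longrightarrow> fin d \<Longrightarrow> V (c - d) = V c - V d" by (simp add: V_def L_diff)
lemma V_neg: "V (- c) = - V c" by (simp add: V_def L_neg)
lemma V_zero: "V 0 = 0" by (simp add: V_def L_zero)

context ctx
begin

lemma L_mem:
  assumes "\<And>p. p \<in> supp c \<Longrightarrow> f p \<in> augpow R k"
  shows "L f c \<in> augpow R k"
  unfolding L_def
  by (rule augpow_sum[OF sR]) (intro augpow_smul[OF sR] sr_of_int[OF sR] assms)

lemma W_in:
  assumes "r \<in> R" "m \<in> MZ n"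
  shows "W (r, m) \<in> augpow R n"
proof -
  obtain x where x: "x \<in> augpow UNIV n" "m = Qcoset UNIV n x" using assms(2) MZ_iff by blast
  have "rep m \<in> augpow UNIV n" using x rep_in by simp
  then have "(emb (rep m) :: _ \<Rightarrow> rat) \<in> augpow R n" by (rule augpow_emb[OF sR])
  then show ?thesis unfolding W_def using augpow_smul[OF sR assms(1)] by simp
qed

lemma V_in:
  assumes "supp c \<subseteq> R \<times> MZ n"
  shows "V c \<in> augpow R n"
  unfolding V_def
proof (rule L_mem)
  fix p assume "p \<in> supp c"
  then have "fst p \<in> R" "snd p \<in> MZ n" using assms by auto
  then show "W p \<in> augpow R n" using W_in by (metis prod.collapse)
qed

lemma V_trel: "u \<in> TR \<Longrightarrow> V u \<in> augpow R (Suc n)"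
proof (induction rule: trel.induct)
  case zero
  have eqV: "V (\<lambda>_. 0) = 0" unfolding zero_fun_def[symmetric] by (rule V_zero)
  show ?case unfolding eqV by (rule augpow_zero[OF sR])
next
  case (lin1 r r' m)
  have "V (fdiff (delta (r + r', m)) (fadd (delta (r, m)) (delta (r', m))))
      = W (r + r', m) - (W (r, m) + W (r', m))"
    unfolding fdiff_eq fadd_eq by (simp add: V_diff V_add fin_add fin_delta V_delta)
  also have "\<dots> = 0" by (simp add: W_def gsmul_def fun_eq_iff algebra_simps)
  finally have eqV: "V (fdiff (delta (r + r', m)) (fadd (delta (r, m)) (delta (r', m)))) = 0" .
  show ?case unfolding eqV by (rule augpow_zero[OF sR])
next
  case (lin2 r m m')
  obtain x where x: "x \<in> augpow UNIV n" "m = Qcoset UNIV n x" using lin2(2) MZ_iff by blast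
  obtain x' where x': "x' \<in> augpow UNIV n" "m' = Qcoset UNIV n x'" using lin2(3) MZ_iff by blast
  have q: "Qadd m m' = Qcoset UNIV n (x + x')" using x x' Qadd_Qcoset[OF sr_UNIV] by simp
  define z0 where "z0 = rep (Qcoset UNIV n (x + x'))"
  define z1 where "z1 = rep m"
  define z2 where "z2 = rep m'"
  have "V (fdiff (delta (r, Qadd m m')) (fadd (delta (r, m)) (delta (r, m'))))
      = W (r, Qadd m m') - (W (r, m) + W (r, m'))"
    unfolding fdiff_eq fadd_eq by (simp add: V_diff V_add fin_add fin_delta V_delta)
  also have "\<dots> = gsmul r (emb ((z0 - (x + x')) - (z1 - x) - (z2 - x')))"
    unfolding W_def z0_def z1_def z2_def q
    by (simp add: gsmul_def emb_def fun_eq_iff algebra_simps)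
  also have "\<dots> \<in> augpow R (Suc n)"
  proof -
    have "z0 - (x + x') \<in> augpow UNIV (Suc n)" unfolding z0_def by (rule rep_Qc)
    moreover have "z1 - x \<in> augpow UNIV (Suc n)" unfolding z1_def x by (rule rep_Qc)
    moreover have "z2 - x' \<in> augpow UNIV (Suc n)" unfolding z2_def x' by (rule rep_Qc)
    ultimately have "(z0 - (x + x')) - (z1 - x) - (z2 - x') \<in> augpow UNIV (Suc n)"
      using augpow_diff[OF sr_UNIV] by blast
    then have "(emb ((z0 - (x + x')) - (z1 - x) - (z2 - x')) :: _ \<Rightarrow> rat) \<in> augpow R (Suc n)"
      by (rule augpow_emb[OF sR])
    then show ?thesis by (rule augpow_smul[OF sR lin2(1)])
  qed
  finally show ?case .
next
  case (add u v)
  have eqV: "V (fadd u v) = V u + V v" unfolding fadd_eq using add(1,2) trel_fin V_add by blast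
  show ?case unfolding eqV by (rule augpow_add[OF sR add.IH(1) add.IH(2)])
next
  case (neg u)
  have e: "(\<lambda>q. - u q) = - u" by (simp add: fun_Compl_def)
  have "V (- u) \<in> augpow R (Suc n)" unfolding V_neg using neg.IH by (rule augpow_neg[OF sR])
  then show ?case by (simp only: e)
qed

lemma fval_eq:
  fixes c :: "rat \<times> ('g::{finite,ab_group_add} \<Rightarrow> int) set \<Rightarrow> int"
  assumes c: "c \<in> tfree R (MZ n)"
  shows "fval R n c = Qcoset R n (V c)"
proof -
  have fc: "finite (supp c)" and sc: "supp c \<subseteq> R \<times> MZ n" using c by (auto simp: tfree_def)
  define F where "F \<rho> = (\<lambda>g::'g. \<Sum>p\<in>supp c. of_int (c p) * fst p * of_int (\<rho> p g) :: rat)" for \<rho>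
  have FV: "F \<rho> - V c = L (\<lambda>p. gsmul (fst p) (emb (\<rho> p - rep (snd p)))) c" for \<rho>
    unfolding F_def V_def L_def W_def
    by (simp add: fun_eq_iff sum_apply gsmul_def emb_def sum_subtractf[symmetric] algebra_simps)
  have FV0: "F (\<lambda>p. rep (snd p)) = V c"
    unfolding F_def V_def L_def W_def
    by (simp add: fun_eq_iff sum_apply gsmul_def emb_def algebra_simps)
  have Fin: "F \<rho> - V c \<in> augpow R (Suc n)" if h: "\<forall>p\<in>supp c. \<rho> p \<in> snd p" for \<rho>
    unfolding FV
  proof (rule L_mem)
    fix p assume p: "p \<in> supp c"
    then have "fst p \<in> R" "snd p \<in> MZ n" using sc by auto
    then obtain x where x: "snd p = Qcoset UNIV n x" using MZ_iff by blast
    have "\<rho> p \<in> Qcoset UNIV n x" using h p x by auto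
    then have "\<rho> p - x \<in> augpow UNIV (Suc n)" using Qcoset_mem[OF sr_UNIV] by blast
    moreover have "rep (snd p) - x \<in> augpow UNIV (Suc n)" unfolding x by (rule rep_Qc)
    ultimately have "(\<rho> p - x) - (rep (snd p) - x) \<in> augpow UNIV (Suc n)"
      using augpow_diff[OF sr_UNIV] by blast
    then have "\<rho> p - rep (snd p) \<in> augpow UNIV (Suc n)" by simp
    then have "(emb (\<rho> p - rep (snd p)) :: _ \<Rightarrow> rat) \<in> augpow R (Suc n)" by (rule augpow_emb[OF sR])
    then show "gsmul (fst p) (emb (\<rho> p - rep (snd p))) \<in> augpow R (Suc n)"
      by (rule augpow_smul[OF sR \<open>fst p \<in> R\<close>])
  qed
  show ?thesis
  proof (intro set_eqI iffI)
    fix z assume "z \<in> fval R n c"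
    then obtain \<rho> y where z: "z = F \<rho> + y" "\<forall>p\<in>supp c. \<rho> p \<in> snd p" "y \<in> augpow R (Suc n)"
      unfolding fval_def F_def gadd_eq by blast
    have eq: "z - V c = (F \<rho> - V c) + y" using z(1) by (simp add: algebra_simps)
    have "z - V c \<in> augpow R (Suc n)" unfolding eq by (rule augpow_add[OF sR Fin[OF z(2)] z(3)])
    then show "z \<in> Qcoset R n (V c)" using Qcoset_mem[OF sR] by blast
  next
    fix z assume "z \<in> Qcoset R n (V c)"
    then obtain y where y: "z = gadd (V c) y" "y \<in> augpow R (Suc n)" unfolding Qcoset_def by blast
    have "\<forall>p\<in>supp c. rep (snd p) \<in> snd p"
    proof
      fix p assume "p \<in> supp c"
      then have "snd p \<in> MZ n" using sc by auto
      then obtain x where x: "snd p = Qcoset UNIV n x" using MZ_iff by blast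
      show "rep (snd p) \<in> snd p" unfolding x by (rule rep_mem[OF Qcoset_self[OF sr_UNIV]])
    qed
    moreover have "z = gadd (F (\<lambda>p. rep (snd p))) y" using y FV0 by simp
    ultimately show "z \<in> fval R n c" unfolding fval_def
      apply (intro CollectI exI[of _ "\<lambda>p. rep (snd p)"] exI[of _ y])
      using y(2) by (simp add: F_def)
  qed
qed

lemma tcls_mem: "c' \<in> tcls R (MZ n) Qadd c \<longleftrightarrow> c' - c \<in> TR"
proof
  assume "c' \<in> tcls R (MZ n) Qadd c"
  then obtain d where d: "c' = fadd c d" "d \<in> TR" unfolding tcls_def by blast
  have "c' - c = d" unfolding d(1) fadd_eq by (rule add_diff_cancel_left')
  then show "c' - c \<in> TR" using d(2) by (simp only:)
next
  assume "c' - c \<in> TR"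
  moreover have "c' = fadd c (c' - c)" unfolding fadd_eq by (simp only: add.commute[of c] diff_add_cancel)
  ultimately show "c' \<in> tcls R (MZ n) Qadd c" unfolding tcls_def by blast
qed

lemma tcls_self: "c \<in> tcls R (MZ n) Qadd c"
  unfolding tcls_mem diff_self by (rule trel_zero)

lemma tcls_eq: "tcls R (MZ n) Qadd c = tcls R (MZ n) Qadd c' \<longleftrightarrow> c - c' \<in> TR"
proof
  assume "tcls R (MZ n) Qadd c = tcls R (MZ n) Qadd c'"
  then have "c \<in> tcls R (MZ n) Qadd c'" using tcls_self[of c] by (simp only:)
  then show "c - c' \<in> TR" unfolding tcls_mem .
next
  assume a: "c - c' \<in> TR"
  have "d - c \<in> TR \<longleftrightarrow> d - c' \<in> TR" for d
  proof
    assume "d - c \<in> TR"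
    then have "(d - c) + (c - c') \<in> TR" using a by (rule trel_add)
    moreover have eq: "(d - c) + (c - c') = d - c'" by (simp add: algebra_simps)
    ultimately show "d - c' \<in> TR" by (simp only: eq)
  next
    assume "d - c' \<in> TR"
    then have "(d - c') - (c - c') \<in> TR" using a by (rule trel_diff)
    moreover have eq: "(d - c') - (c - c') = d - c" by (simp add: algebra_simps)
    ultimately show "d - c \<in> TR" by (simp only: eq)
  qed
  then show "tcls R (MZ n) Qadd c = tcls R (MZ n) Qadd c'" unfolding set_eq_iff tcls_mem by blast
qed

lemma tfree_add:
  assumes "c \<in> tfree R M" "d \<in> tfree R M" shows "c + d \<in> tfree R M"
proof -
  have a: "finite (supp c)" "supp c \<subseteq> R \<times> M" "finite (supp d)" "supp d \<subseteq> R \<times> M"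
    using assms by (auto simp: tfree_def)
  have "finite (supp (c + d))" by (rule finite_subset[OF supp_add finite_UnI[OF a(1) a(3)]])
  moreover have "supp (c + d) \<subseteq> R \<times> M" using supp_add[of c d] a by blast
  ultimately show ?thesis by (simp add: tfree_def)
qed

lemma trel_in_tfree: "d \<in> TR \<Longrightarrow> d \<in> tfree R (MZ n)"
  using trel_tfree[of d] unfolding tfree_def fin_def by (intro CollectI)

lemma Fmap_tcls:
  assumes c: "c \<in> tfree R (MZ n)"
  shows "Fmap R n (tcls R (MZ n) Qadd c) = Qcoset R n (V c)"
proof -
  have "fval R n c' = Qcoset R n (V c)" if "c' \<in> tcls R (MZ n) Qadd c" for c'
  proof -
    define d where "d = c' - c"
    have d: "c' = c + d" "d \<in> TR" using that tcls_mem by (auto simp: d_def)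
    have fc: "fin c" using c by (simp add: tfree_def fin_def)
    have "c' \<in> tfree R (MZ n)" unfolding d(1) by (rule tfree_add[OF c trel_in_tfree[OF d(2)]])
    then have e1: "fval R n c' = Qcoset R n (V c')" by (rule fval_eq)
    have e2: "V c' = V c + V d" unfolding d(1) by (rule V_add[OF fc trel_fin[OF d(2)]])
    have e3: "Qcoset R n (V c + V d) = Qcoset R n (V c)"
      unfolding Qcoset_eq[OF sR] add_diff_cancel_left' by (rule V_trel[OF d(2)])
    show ?thesis unfolding e1 e2 e3 ..
  qed
  then have "Fmap R n (tcls R (MZ n) Qadd c) = (\<Union>c'\<in>tcls R (MZ n) Qadd c. Qcoset R n (V c))"
    unfolding Fmap_def by (intro SUP_cong) auto
  also have "\<dots> = Qcoset R n (V c)"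
  proof -
    have "tcls R (MZ n) Qadd c \<noteq> {}" using tcls_self by blast
    then show ?thesis by (simp only: UN_constant if_False)
  qed
  finally show ?thesis .
qed

end



lemma gsmul_0: "gsmul 0 x = 0" by (simp add: gsmul_def fun_eq_iff)
lemma gsmul_Suc: "gsmul (int (Suc k)) x = gsmul (int k) x + x"
  by (simp add: gsmul_def fun_eq_iff algebra_simps)
lemma gsmul_uminus: "gsmul (- k) x = - gsmul k x"
  by (simp add: gsmul_def fun_eq_iff)
lemma gsmul_Suc_int: "gsmul (int (Suc k)) (x :: 'x \<Rightarrow> int) = gsmul (int k) x + x"
  by (rule gsmul_Suc)

context ctx
begin

abbreviation Qc :: "('g::{finite,ab_group_add} \<Rightarrow> int) \<Rightarrow> ('g \<Rightarrow> int) set" where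
  "Qc x \<equiv> Qcoset UNIV n x"

lemma eqv_0_iff: "eqv 0 d \<longleftrightarrow> d \<in> TR"
proof -
  have "eqv 0 d \<longleftrightarrow> eqv d 0" using eqv_sym by blast
  then show ?thesis by (simp add: eqv_zero_iff)
qed

lemma lin1': "r \<in> R \<Longrightarrow> r' \<in> R \<Longrightarrow> m \<in> MZ n \<Longrightarrow> eqv (delta (r + r', m)) (delta (r, m) + delta (r', m))"
  unfolding eqv_def fdiff_eq[symmetric] fadd_eq[symmetric] by (rule trel.lin1)

lemma lin2': "r \<in> R \<Longrightarrow> x \<in> augpow UNIV n \<Longrightarrow> x' \<in> augpow UNIV n \<Longrightarrow>
    eqv (delta (r, Qc (x + x'))) (delta (r, Qc x) + delta (r, Qc x'))"
proof -
  assume a: "r \<in> R" "x \<in> augpow UNIV n" "x' \<in> augpow UNIV n"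
  have "Qc (x + x') = Qadd (Qc x) (Qc x')" by (rule Qadd_Qcoset[OF sr_UNIV, symmetric])
  moreover have "fdiff (delta (r, Qadd (Qc x) (Qc x'))) (fadd (delta (r, Qc x)) (delta (r, Qc x'))) \<in> TR"
    by (rule trel.lin2[OF a(1) MZ_Qc[OF a(2)] MZ_Qc[OF a(3)]])
  ultimately show ?thesis unfolding eqv_def fdiff_eq fadd_eq by simp
qed

lemma delta0_trel: "m \<in> MZ n \<Longrightarrow> delta (0, m) \<in> TR"
proof -
  assume m: "m \<in> MZ n"
  have "eqv (delta (0 + 0, m)) (delta (0, m) + delta (0, m))" by (rule lin1'[OF sr_zero[OF sR] sr_zero[OF sR] m])
  then have "delta (0, m) - (delta (0, m) + delta (0, m)) \<in> TR" by (simp add: eqv_def)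
  moreover have "delta (0, m) - (delta (0, m) + delta (0, m)) = - delta (0, m)" by simp
  ultimately have "- delta (0, m) \<in> TR" by simp
  then have "- (- delta (0, m)) \<in> TR" by (rule trel_neg)
  then show ?thesis by simp
qed

lemma deltaQ0_trel: "r \<in> R \<Longrightarrow> delta (r, Qc (0::'g::{finite,ab_group_add} \<Rightarrow> int)) \<in> TR"
proof -
  assume r: "r \<in> R"
  have z: "(0::'g \<Rightarrow> int) \<in> augpow UNIV n" by (rule augpow_zero[OF sr_UNIV])
  have "eqv (delta (r, Qc (0 + 0))) (delta (r, Qc 0) + delta (r, Qc (0::'g \<Rightarrow> int)))" by (rule lin2'[OF r z z])
  then have "delta (r, Qc 0) - (delta (r, Qc 0) + delta (r, Qc (0::'g \<Rightarrow> int))) \<in> TR" by (simp add: eqv_def)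
  moreover have "delta (r, Qc 0) - (delta (r, Qc 0) + delta (r, Qc (0::'g \<Rightarrow> int))) = - delta (r, Qc 0)" by simp
  ultimately have "- delta (r, Qc (0::'g \<Rightarrow> int)) \<in> TR" by simp
  then have "- (- delta (r, Qc (0::'g \<Rightarrow> int))) \<in> TR" by (rule trel_neg)
  then show ?thesis by simp
qed

lemma eqv_negate: "z \<in> TR \<Longrightarrow> eqv z (a + b) \<Longrightarrow> eqv b (- a)"
proof -
  assume z: "z \<in> TR" and e: "eqv z (a + b)"
  have "z - (a + b) \<in> TR" using e by (simp add: eqv_def)
  then have "z - (z - (a + b)) \<in> TR" using z trel_diff by blast
  moreover have "z - (z - (a + b)) = b - (- a)" by (simp add: algebra_simps)
  ultimately show "eqv b (- a)" unfolding eqv_def by simp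
qed

lemma Ha_nat: "r \<in> R \<Longrightarrow> m \<in> MZ n \<Longrightarrow> eqv (delta (of_nat k * r, m)) (gsmul (int k) (delta (r, m)))"
proof (induction k)
  case 0
  have "eqv (delta (0, m)) 0" unfolding eqv_zero_iff by (rule delta0_trel[OF 0(2)])
  moreover have e1: "of_nat 0 * r = 0" by simp
  moreover have e2: "gsmul (int 0) (delta (r, m)) = 0" by (simp only: of_nat_0 gsmul_0)
  ultimately show ?case by (simp only:)
next
  case (Suc k)
  have kr: "of_nat k * r \<in> R" using sR Suc.prems sr_mult sr_of_nat by blast
  have "eqv (delta (of_nat k * r + r, m)) (delta (of_nat k * r, m) + delta (r, m))"
    by (rule lin1'[OF kr Suc.prems(1) Suc.prems(2)])
  moreover have "eqv (delta (of_nat k * r, m) + delta (r, m)) (gsmul (int k) (delta (r, m)) + delta (r, m))"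
    using Suc.IH[OF Suc.prems] eqv_refl by (rule eqv_add)
  ultimately have "eqv (delta (of_nat k * r + r, m)) (gsmul (int k) (delta (r, m)) + delta (r, m))"
    by (rule eqv_trans)
  moreover have "of_nat (Suc k) * r = of_nat k * r + r" by (simp add: algebra_simps)
  ultimately show ?case by (simp only: gsmul_Suc)
qed

lemma delta_neg_r: "s \<in> R \<Longrightarrow> m \<in> MZ n \<Longrightarrow> eqv (delta (- s, m)) (- delta (s, m))"
proof -
  assume s: "s \<in> R" and m: "m \<in> MZ n"
  have "eqv (delta (s + - s, m)) (delta (s, m) + delta (- s, m))"
    by (rule lin1'[OF s sr_neg[OF sR s] m])
  then have "eqv (delta (0, m)) (delta (s, m) + delta (- s, m))" by simp
  then show ?thesis by (rule eqv_negate[OF delta0_trel[OF m]])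
qed

lemma Ha: "r \<in> R \<Longrightarrow> m \<in> MZ n \<Longrightarrow> eqv (delta (of_int j * r, m)) (gsmul j (delta (r, m)))"
proof (cases j rule: int_cases)
  case (nonneg k)
  assume "r \<in> R" "m \<in> MZ n"
  then show ?thesis using Ha_nat nonneg by simp
next
  case (neg k)
  assume r: "r \<in> R" and m: "m \<in> MZ n"
  define j' where "j' = int (Suc k)"
  have j: "j = - j'" using neg by (simp add: j'_def)
  have s: "of_int j' * r \<in> R" using sR r sr_mult sr_of_int by blast
  have "eqv (delta (- (of_int j' * r), m)) (- delta (of_int j' * r, m))" by (rule delta_neg_r[OF s m])
  moreover have "eqv (- delta (of_int j' * r, m)) (- gsmul j' (delta (r, m)))"
    using Ha_nat[OF r m, of "Suc k"] unfolding j'_def by (intro eqv_neg) simp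
  ultimately have "eqv (delta (- (of_int j' * r), m)) (- gsmul j' (delta (r, m)))" by (rule eqv_trans)
  then show ?thesis unfolding j by (simp add: gsmul_uminus)
qed

lemma Hb_nat: "r \<in> R \<Longrightarrow> (x::'g::{finite,ab_group_add} \<Rightarrow> int) \<in> augpow UNIV n \<Longrightarrow> eqv (gsmul (int k) (delta (r, Qc x))) (delta (r, Qc (gsmul (int k) x)))"
proof (induction k)
  case 0
  have "eqv 0 (delta (r, Qc (0::'g \<Rightarrow> int)))" unfolding eqv_0_iff by (rule deltaQ0_trel[OF 0(1)])
  moreover have e2: "gsmul (int 0) (delta (r, Qc x)) = 0" by (simp only: of_nat_0 gsmul_0)
  moreover have e3: "gsmul (int 0) x = 0" by (simp only: of_nat_0 gsmul_0)
  ultimately show ?case by (simp only:)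
next
  case (Suc k)
  have kx: "gsmul (int k) x \<in> augpow UNIV n" using Suc.prems augpow_smul[OF sr_UNIV] by blast
  have "eqv (gsmul (int k) (delta (r, Qc x)) + delta (r, Qc x)) (delta (r, Qc (gsmul (int k) x)) + delta (r, Qc x))"
    using Suc.IH[OF Suc.prems] eqv_refl by (rule eqv_add)
  moreover have "eqv (delta (r, Qc (gsmul (int k) x)) + delta (r, Qc x)) (delta (r, Qc (gsmul (int k) x + x)))"
    by (rule eqv_sym[OF lin2'[OF Suc.prems(1) kx Suc.prems(2)]])
  ultimately have "eqv (gsmul (int k) (delta (r, Qc x)) + delta (r, Qc x)) (delta (r, Qc (gsmul (int k) x + x)))"
    by (rule eqv_trans)
  then show ?case by (simp only: gsmul_Suc)
qed

lemma delta_neg_x: "r \<in> R \<Longrightarrow> y \<in> augpow UNIV n \<Longrightarrow> eqv (delta (r, Qc (- y))) (- delta (r, Qc y))"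
proof -
  assume r: "r \<in> R" and y: "y \<in> augpow UNIV n"
  have "eqv (delta (r, Qc (y + - y))) (delta (r, Qc y) + delta (r, Qc (- y)))"
    by (rule lin2'[OF r y augpow_neg[OF sr_UNIV y]])
  then have "eqv (delta (r, Qc 0)) (delta (r, Qc y) + delta (r, Qc (- y)))" by simp
  then show ?thesis by (rule eqv_negate[OF deltaQ0_trel[OF r]])
qed

lemma Hb: "r \<in> R \<Longrightarrow> x \<in> augpow UNIV n \<Longrightarrow> eqv (gsmul j (delta (r, Qc x))) (delta (r, Qc (gsmul j x)))"
proof (cases j rule: int_cases)
  case (nonneg k)
  assume "r \<in> R" "x \<in> augpow UNIV n"
  then show ?thesis using Hb_nat nonneg by simp
next
  case (neg k)
  assume r: "r \<in> R" and x: "x \<in> augpow UNIV n"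
  define j' where "j' = int (Suc k)"
  have j: "j = - j'" using neg by (simp add: j'_def)
  have y: "gsmul j' x \<in> augpow UNIV n" using x augpow_smul[OF sr_UNIV] by blast
  have "eqv (- gsmul j' (delta (r, Qc x))) (- delta (r, Qc (gsmul j' x)))"
    using Hb_nat[OF r x, of "Suc k"] unfolding j'_def by (intro eqv_neg) simp
  moreover have "eqv (- delta (r, Qc (gsmul j' x))) (delta (r, Qc (- gsmul j' x)))"
    by (rule eqv_sym[OF delta_neg_x[OF r y]])
  ultimately have "eqv (- gsmul j' (delta (r, Qc x))) (delta (r, Qc (- gsmul j' x)))" by (rule eqv_trans)
  then show ?thesis unfolding j by (simp add: gsmul_uminus)
qed

lemma H: "r \<in> R \<Longrightarrow> x \<in> augpow UNIV n \<Longrightarrow> eqv (delta (of_int j * r, Qc x)) (delta (r, Qc (gsmul j x)))"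
  using Ha[OF _ MZ_Qc] Hb eqv_trans by blast


lemma red_sum:
  fixes k :: "rat \<times> ('g::{finite,ab_group_add} \<Rightarrow> int) set \<Rightarrow> int"
  assumes "finite S" "S \<subseteq> R \<times> MZ n"
  shows "\<exists>D x. D > 0 \<and> 1 / of_int D \<in> R \<and> x \<in> augpow UNIV n \<and>
           eqv (\<Sum>p\<in>S. gsmul (k p) (delta p)) (delta (1 / of_int D, Qc x))"
  using assms
proof (induction S rule: finite_induct)
  case empty
  have z: "(0::'g \<Rightarrow> int) \<in> augpow UNIV n" by (rule augpow_zero[OF sr_UNIV])
  have eq: "eqv 0 (delta (1 / of_int 1, Qc (0::'g \<Rightarrow> int)))"
    unfolding eqv_0_iff using deltaQ0_trel[OF sr_one[OF sR]] by simp
  have a1: "(1::int) > 0" by simp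
  have a2: "1 / of_int (1::int) \<in> R" using sr_one[OF sR] by simp
  show ?case unfolding sum.empty
    apply (rule exI[of _ "1::int"], rule exI[of _ "0::'g \<Rightarrow> int"])
    using a1 a2 z eq by (intro conjI)
next
  case (insert p F)
  obtain D x where IH: "D > 0" "1 / of_int D \<in> R" "x \<in> augpow UNIV n"
    "eqv (\<Sum>p\<in>F. gsmul (k p) (delta p)) (delta (1 / of_int D, Qc x))"
    using insert by auto
  obtain r0 m0 where p: "p = (r0, m0)" by (cases p)
  have r0: "r0 \<in> R" and m0: "m0 \<in> MZ n" using insert(4) p by auto
  obtain x0 where x0: "x0 \<in> augpow UNIV n" "m0 = Qc x0" using m0 MZ_iff by blast
  obtain b a where b: "b > 0" "1 / of_int b \<in> R" "of_int b * r0 = of_int a"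
    using den[OF sR r0] by blast
  define u where "u = (1 / of_int (D * b) :: rat)"
  have uR: "u \<in> R"
  proof -
    have "u = (1 / of_int D) * (1 / of_int b)" by (simp add: u_def)
    then show ?thesis using sr_mult[OF sR IH(2) b(2)] by simp
  qed
  have e1: "1 / of_int D = of_int b * u" using b(1) IH(1) by (simp add: u_def)
  have e2: "r0 = of_int (a * D) * u"
  proof -
    have "r0 = of_int a / of_int b" using b(1) b(3) by (simp add: field_simps)
    then show ?thesis using b(1) IH(1) by (simp add: u_def)
  qed
  define y0 where "y0 = gsmul (a * D) x0"
  have y0: "y0 \<in> augpow UNIV n" unfolding y0_def using x0(1) augpow_smul[OF sr_UNIV] by blast
  define y1 where "y1 = gsmul (k p) y0"
  define y2 where "y2 = gsmul b x"
  have y1: "y1 \<in> augpow UNIV n" unfolding y1_def using y0 augpow_smul[OF sr_UNIV] by blast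
  have y2: "y2 \<in> augpow UNIV n" unfolding y2_def using IH(3) augpow_smul[OF sr_UNIV] by blast
  have A: "eqv (delta (1 / of_int D, Qc x)) (delta (u, Qc y2))"
    unfolding e1 y2_def by (rule H[OF uR IH(3)])
  have B: "eqv (delta p) (delta (u, Qc y0))"
    unfolding p x0(2) y0_def by (subst e2) (rule H[OF uR x0(1)])
  have B2: "eqv (gsmul (k p) (delta p)) (delta (u, Qc y1))"
    unfolding y1_def by (rule eqv_trans[OF eqv_gsmul[OF B] Hb[OF uR y0]])
  have "eqv (gsmul (k p) (delta p) + (\<Sum>p\<in>F. gsmul (k p) (delta p))) (delta (u, Qc y1) + delta (u, Qc y2))"
    by (rule eqv_add[OF B2 eqv_trans[OF IH(4) A]])
  moreover have "eqv (delta (u, Qc y1) + delta (u, Qc y2)) (delta (u, Qc (y1 + y2)))"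
    by (rule eqv_sym[OF lin2'[OF uR y1 y2]])
  ultimately have ev: "eqv (gsmul (k p) (delta p) + (\<Sum>p\<in>F. gsmul (k p) (delta p))) (delta (u, Qc (y1 + y2)))"
    by (rule eqv_trans)
  have se: "(\<Sum>p\<in>insert p F. gsmul (k p) (delta p)) = gsmul (k p) (delta p) + (\<Sum>p\<in>F. gsmul (k p) (delta p))"
    using insert(1,2) by (rule sum.insert)
  have ev2: "eqv (\<Sum>p\<in>insert p F. gsmul (k p) (delta p)) (delta (u, Qc (y1 + y2)))"
    unfolding se by (rule ev)
  have yy: "y1 + y2 \<in> augpow UNIV n" using y1 y2 augpow_add[OF sr_UNIV] by blast
  have Db: "D * b > 0" using IH(1) b(1) by simp
  show ?case
    apply (rule exI[of _ "D * b"], rule exI[of _ "y1 + y2"])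
    using Db uR yy ev2 unfolding u_def by (intro conjI)
qed

lemma red:
  fixes c :: "rat \<times> ('g::{finite,ab_group_add} \<Rightarrow> int) set \<Rightarrow> int"
  assumes c: "c \<in> tfree R (MZ n)"
  shows "\<exists>D x. D > 0 \<and> 1 / of_int D \<in> R \<and> x \<in> augpow UNIV n \<and> eqv c (delta (1 / of_int D, Qc x))"
proof -
  have fc: "fin c" and sc: "supp c \<subseteq> R \<times> MZ n" using c by (auto simp: tfree_def fin_def)
  have "c = L delta c" using L_self[OF fc] by simp
  also have "\<dots> = (\<Sum>p\<in>supp c. gsmul (c p) (delta p))" by (simp add: L_def)
  finally have ce: "c = (\<Sum>p\<in>supp c. gsmul (c p) (delta p))" .
  obtain D x where h: "D > 0" "1 / of_int D \<in> R" "x \<in> augpow UNIV n"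
    "eqv (\<Sum>p\<in>supp c. gsmul (c p) (delta p)) (delta (1 / of_int D, Qc x))"
    using red_sum[of "supp c" c] fc sc unfolding fin_def by blast
  have "eqv c (delta (1 / of_int D, Qc x))" using h(4) unfolding ce[symmetric] .
  then show ?thesis using h(1-3) by blast
qed

lemma key:
  fixes c :: "rat \<times> ('g::{finite,ab_group_add} \<Rightarrow> int) set \<Rightarrow> int"
  assumes c: "c \<in> tfree R (MZ n)" and Vc: "V c \<in> augpow R (Suc n)"
  shows "c \<in> TR"
proof -
  obtain D x where Dx: "D > 0" "1 / of_int D \<in> R" "x \<in> augpow UNIV n" "eqv c (delta (1 / of_int D, Qc x))"
    using red[OF c] by blast
  define d where "d = delta (1 / of_int D :: rat, Qc x)"
  have fc: "fin c" using c by (simp add: tfree_def fin_def)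
  have "c - d \<in> TR" using Dx(4) by (simp add: eqv_def d_def)
  then have "V (c - d) \<in> augpow R (Suc n)" by (rule V_trel)
  then have "V c - V d \<in> augpow R (Suc n)" using V_diff[OF fc fin_delta] by (simp add: d_def)
  then have "V c - (V c - V d) \<in> augpow R (Suc n)" using Vc augpow_diff[OF sR] by blast
  then have Vd: "V d \<in> augpow R (Suc n)" by simp
  have Vd_eq: "V d = gsmul (1 / of_int D) (emb (rep (Qc x)))" by (simp add: d_def V_delta W_def)
  define g1 where "g1 = gsmul (1 / of_int D) (emb x :: 'g \<Rightarrow> rat)"
  have g1e: "g1 = V d - gsmul (1 / of_int D) (emb (rep (Qc x) - x))"
    unfolding Vd_eq g1_def by (simp add: gsmul_def emb_def fun_eq_iff algebra_simps)
  have "(emb (rep (Qc x) - x) :: 'g \<Rightarrow> rat) \<in> augpow R (Suc n)" by (rule augpow_emb[OF sR rep_Qc])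
  then have "gsmul (1 / of_int D) (emb (rep (Qc x) - x)) \<in> augpow R (Suc n)"
    by (rule augpow_smul[OF sR Dx(2)])
  then have g1in: "g1 \<in> augpow R (Suc n)" unfolding g1e using Vd augpow_diff[OF sR] by blast
  obtain e w where ew: "e > 0" "1 / of_int e \<in> R" "w \<in> augpow UNIV (Suc n)" "gsmul (of_int e) g1 = emb w"
    using span[OF sR g1in] by blast
  have exw: "gsmul e x = gsmul D w"
  proof -
    have "of_int e * (1 / of_int D * of_int (x g)) = (of_int (w g) :: rat)" for g
      using ew(4) unfolding g1_def by (simp add: gsmul_def emb_def fun_eq_iff)
    then have "(of_int (e * x g) :: rat) = of_int (D * w g)" for g
      using Dx(1) by (simp add: field_simps)
    then have "e * x g = D * w g" for g by (simp only: of_int_eq_iff)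
    then show ?thesis by (simp add: gsmul_def fun_eq_iff)
  qed
  have exin: "gsmul e x \<in> augpow UNIV (Suc n)" unfolding exw using ew(3) augpow_smul[OF sr_UNIV] by blast
  define u where "u = (1 / of_int (D * e) :: rat)"
  have uR: "u \<in> R"
  proof -
    have "u = (1 / of_int D) * (1 / of_int e)" by (simp add: u_def)
    then show ?thesis using sr_mult[OF sR Dx(2) ew(2)] by simp
  qed
  have e1: "1 / of_int D = of_int e * u" using ew(1) Dx(1) by (simp add: u_def)
  have "eqv d (delta (u, Qc (gsmul e x)))" unfolding d_def e1 by (rule H[OF uR Dx(3)])
  moreover have "Qc (gsmul e x) = Qc 0" unfolding Qcoset_eq[OF sr_UNIV] using exin by simp
  moreover have "eqv (delta (u, Qc (0::'g \<Rightarrow> int))) 0" unfolding eqv_zero_iff by (rule deltaQ0_trel[OF uR])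
  ultimately have "eqv d (delta (u, Qc (0::'g \<Rightarrow> int)))" by (simp only:)
  then have "eqv d 0" using \<open>eqv (delta (u, Qc (0::'g \<Rightarrow> int))) 0\<close> by (rule eqv_trans)
  then have "eqv c 0" by (rule eqv_trans[OF Dx(4)[folded d_def]])
  then show ?thesis by (simp add: eqv_zero_iff)
qed

end



lemma add_minus_cancel_ab: "c + (c' - c) = (c'::'a::ab_group_add)" by (simp add: algebra_simps)
lemma diff_add_add_ab: "(a + b) - (c + c') = (a - c) + (b - (c'::'a::ab_group_add))" by (simp add: algebra_simps)
lemma add_cancel3_ab: "(c + (z - (c + c'))) + c' = (z::'a::ab_group_add)" by (simp add: algebra_simps)

lemma tsm_L: "tsm s c = L (\<lambda>p. delta (s * fst p, snd p)) c"
  by (simp add: tsm_def L_def fun_eq_iff sum_apply gsmul_def)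

lemma tsm_add: "fin c \<Longrightarrow> fin d \<Longrightarrow> tsm s (c + d) = tsm s c + tsm s d"
  unfolding tsm_L by (rule L_add)
lemma tsm_neg: "tsm s (- c) = - tsm s c"
  unfolding tsm_L by (rule L_neg)
lemma tsm_diff: "fin c \<Longrightarrow> fin d \<Longrightarrow> tsm s (c - d) = tsm s c - tsm s d"
  unfolding tsm_L by (rule L_diff)
lemma tsm_delta: "tsm s (delta p) = delta (s * fst p, snd p)"
  unfolding tsm_L by (rule L_delta)
lemma tsm_zero: "tsm s 0 = 0"
  unfolding tsm_L by (rule L_zero)

lemma supp_tsm: "supp (tsm s c) \<subseteq> (\<lambda>p. (s * fst p, snd p)) ` supp c"
proof
  fix q assume q: "q \<in> supp (tsm s c)"
  show "q \<in> (\<lambda>p. (s * fst p, snd p)) ` supp c"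
  proof (rule ccontr)
    assume nq: "q \<notin> (\<lambda>p. (s * fst p, snd p)) ` supp c"
    have "tsm s c q = (\<Sum>p\<in>supp c. c p * delta (s * fst p, snd p) q)" by (simp add: tsm_def)
    also have "\<dots> = 0"
    proof (rule sum.neutral, rule ballI)
      fix p assume "p \<in> supp c"
      then have "q \<noteq> (s * fst p, snd p)" using nq by blast
      then show "c p * delta (s * fst p, snd p) q = 0" by (simp add: delta_def)
    qed
    finally show False using q by (simp add: supp_def)
  qed
qed

lemma L_gsmul_left: "L (\<lambda>p. gsmul s (f p)) c = gsmul s (L f c)"
  unfolding L_def gsmul_sum
  by (rule sum.cong) (simp_all add: gsmul_gsmul mult.commute)

lemma V_tsm: "fin c \<Longrightarrow> V (tsm s c) = gsmul s (V c)"
proof -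
  assume fc: "fin c"
  have "V (tsm s c) = L (\<lambda>p. V (delta (s * fst p, snd p))) c"
    unfolding V_def tsm_L by (rule L_comp[OF fc fin_delta])
  also have "\<dots> = L (\<lambda>p. gsmul s (W p)) c"
    by (simp add: V_delta W_def gsmul_gsmul)
  also have "\<dots> = gsmul s (V c)" unfolding V_def by (rule L_gsmul_left)
  finally show ?thesis .
qed

context ctx
begin

lemma tfree_fin: "c \<in> tfree R M \<Longrightarrow> fin c" by (simp add: tfree_def fin_def)

lemma tfree_neg: "c \<in> tfree R M \<Longrightarrow> - c \<in> tfree R M"
  by (simp add: tfree_def supp_neg)

lemma tfree_diff: "c \<in> tfree R M \<Longrightarrow> d \<in> tfree R M \<Longrightarrow> c - d \<in> tfree R M"
  unfolding diff_conv_add_uminus by (intro tfree_add tfree_neg)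

lemma tsm_tfree:
  assumes s: "s \<in> R" and c: "c \<in> tfree R (MZ n)"
  shows "tsm s c \<in> tfree R (MZ n)"
proof -
  have fc: "finite (supp c)" and sc: "supp c \<subseteq> R \<times> MZ n" using c by (auto simp: tfree_def)
  have "finite (supp (tsm s c))" by (rule finite_subset[OF supp_tsm finite_imageI[OF fc]])
  moreover have "(\<lambda>p. (s * fst p, snd p)) ` supp c \<subseteq> R \<times> MZ n"
    using sc sr_mult[OF sR s] by auto
  then have "supp (tsm s c) \<subseteq> R \<times> MZ n" using supp_tsm by (rule subset_trans[rotated])
  ultimately show ?thesis by (simp add: tfree_def)
qed

lemma tsm_trel: "u \<in> TR \<Longrightarrow> s \<in> R \<Longrightarrow> tsm s u \<in> TR"
proof (induction rule: trel.induct)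
  case zero
  have e: "tsm s (\<lambda>_. 0) = 0" unfolding zero_fun_def[symmetric] by (rule tsm_zero)
  show ?case unfolding e by (rule trel_zero)
next
  case (lin1 r r' m)
  have e: "tsm s (fdiff (delta (r + r', m)) (fadd (delta (r, m)) (delta (r', m))))
      = fdiff (delta (s * r + s * r', m)) (fadd (delta (s * r, m)) (delta (s * r', m)))"
    unfolding fdiff_eq fadd_eq
    by (simp add: tsm_diff tsm_add fin_add fin_delta tsm_delta distrib_left)
  show ?case unfolding e
    by (rule trel.lin1[OF sr_mult[OF sR lin1.prems lin1.hyps(1)] sr_mult[OF sR lin1.prems lin1.hyps(2)] lin1.hyps(3)])
next
  case (lin2 r m m')
  have e: "tsm s (fdiff (delta (r, Qadd m m')) (fadd (delta (r, m)) (delta (r, m'))))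
      = fdiff (delta (s * r, Qadd m m')) (fadd (delta (s * r, m)) (delta (s * r, m')))"
    unfolding fdiff_eq fadd_eq
    by (simp add: tsm_diff tsm_add fin_add fin_delta tsm_delta)
  show ?case unfolding e
    by (rule trel.lin2[OF sr_mult[OF sR lin2.prems lin2.hyps(1)] lin2.hyps(2) lin2.hyps(3)])
next
  case (add u v)
  have e: "tsm s (fadd u v) = fadd (tsm s u) (tsm s v)"
    unfolding fadd_eq by (rule tsm_add[OF trel_fin[OF add.hyps(1)] trel_fin[OF add.hyps(2)]])
  show ?case unfolding e by (rule trel.add[OF add.IH(1)[OF add.prems] add.IH(2)[OF add.prems]])
next
  case (neg u)
  have e0: "(\<lambda>q. - u q) = - u" by (simp add: fun_Compl_def)
  have e1: "(\<lambda>q. - tsm s u q) = - tsm s u" by (simp add: fun_Compl_def)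
  have "(\<lambda>q. - tsm s u q) \<in> TR" by (rule trel.neg[OF neg.IH[OF neg.prems]])
  then have "- tsm s u \<in> TR" by (simp only: e1)
  then show ?case by (simp only: e0 tsm_neg)
qed

lemma tsmul_tcls:
  assumes s: "s \<in> R" and c: "c \<in> tfree R (MZ n)"
  shows "tsmul R (MZ n) Qadd s (tcls R (MZ n) Qadd c) = tcls R (MZ n) Qadd (tsm s c)"
proof (intro set_eqI iffI)
  fix z assume "z \<in> tsmul R (MZ n) Qadd s (tcls R (MZ n) Qadd c)"
  then obtain c' d where z: "z = fadd (tsm s c') d" "c' \<in> tcls R (MZ n) Qadd c" "d \<in> TR"
    unfolding tsmul_def by blast
  have h: "c' - c \<in> TR" using z(2) tcls_mem by blast
  have fc: "fin c" using c by (rule tfree_fin)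
  have "tsm s (c + (c' - c)) = tsm s c + tsm s (c' - c)" by (rule tsm_add[OF fc trel_fin[OF h]])
  then have e: "tsm s c' = tsm s c + tsm s (c' - c)" by (simp only: add_minus_cancel_ab)
  have "z - tsm s c = tsm s (c' - c) + d" unfolding z(1) fadd_eq e by (simp add: algebra_simps)
  moreover have "tsm s (c' - c) + d \<in> TR" by (rule trel_add[OF tsm_trel[OF h s] z(3)])
  ultimately have "z - tsm s c \<in> TR" by (simp only:)
  then show "z \<in> tcls R (MZ n) Qadd (tsm s c)" unfolding tcls_mem .
next
  fix z assume "z \<in> tcls R (MZ n) Qadd (tsm s c)"
  then have h: "z - tsm s c \<in> TR" unfolding tcls_mem .
  have "z = fadd (tsm s c) (z - tsm s c)" unfolding fadd_eq by (rule add_minus_cancel_ab[symmetric])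
  then show "z \<in> tsmul R (MZ n) Qadd s (tcls R (MZ n) Qadd c)"
    unfolding tsmul_def using h tcls_self by blast
qed

lemma tadd_tcls:
  "tadd (tcls R (MZ n) Qadd c) (tcls R (MZ n) Qadd c') = tcls R (MZ n) Qadd (c + c')"
proof (intro set_eqI iffI)
  fix z assume "z \<in> tadd (tcls R (MZ n) Qadd c) (tcls R (MZ n) Qadd c')"
  then obtain a b where z: "z = fadd a b" "a \<in> tcls R (MZ n) Qadd c" "b \<in> tcls R (MZ n) Qadd c'"
    unfolding tadd_def by blast
  have "(a - c) + (b - c') \<in> TR" using z(2,3) tcls_mem trel_add by blast
  then have "z - (c + c') \<in> TR" unfolding z(1) fadd_eq diff_add_add_ab .
  then show "z \<in> tcls R (MZ n) Qadd (c + c')" unfolding tcls_mem .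
next
  fix z assume "z \<in> tcls R (MZ n) Qadd (c + c')"
  then have h: "z - (c + c') \<in> TR" unfolding tcls_mem .
  define a where "a = c + (z - (c + c'))"
  have ac: "a - c = z - (c + c')" unfolding a_def by (rule add_diff_cancel_left')
  have "a \<in> tcls R (MZ n) Qadd c" unfolding tcls_mem ac by (rule h)
  moreover have "z = fadd a c'" unfolding fadd_eq a_def by (rule add_cancel3_ab[symmetric])
  ultimately show "z \<in> tadd (tcls R (MZ n) Qadd c) (tcls R (MZ n) Qadd c')"
    unfolding tadd_def using tcls_self by blast
qed

lemma fval_tcls:
  assumes c0: "c0 \<in> tfree R (MZ n)" and c: "c \<in> tcls R (MZ n) Qadd c0"
  shows "fval R n c = Qcoset R n (V c0)"
proof -
  have h: "c - c0 \<in> TR" using c tcls_mem by blast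
  have ct: "c \<in> tfree R (MZ n)"
    using tfree_add[OF c0 trel_in_tfree[OF h]] by (simp only: add_minus_cancel_ab)
  have "fval R n c = Qcoset R n (V c)" by (rule fval_eq[OF ct])
  also have "\<dots> = Qcoset R n (V c0)"
  proof -
    have "V c - V c0 = V (c - c0)" by (rule V_diff[OF tfree_fin[OF ct] tfree_fin[OF c0], symmetric])
    then have "V c - V c0 \<in> augpow R (Suc n)" using V_trel[OF h] by simp
    then show ?thesis using Qcoset_eq[OF sR] by blast
  qed
  finally show ?thesis .
qed

lemma surj_part:
  assumes x: "x \<in> augpow R n"
  shows "\<exists>c\<in>tfree R (MZ n). Qcoset R n x = Qcoset R n (V c)"
proof -
  obtain e w where ew: "e > 0" "1 / of_int e \<in> R" "w \<in> augpow UNIV n" "gsmul (of_int e) x = emb w"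
    using span[OF sR x] by blast
  define c where "c = delta (1 / of_int e :: rat, Qc w)"
  have "supp c \<subseteq> R \<times> MZ n" using ew(2) MZ_Qc[OF ew(3)] by (simp add: c_def supp_delta)
  then have ct: "c \<in> tfree R (MZ n)" by (simp add: tfree_def c_def supp_delta)
  have Vc: "V c = gsmul (1 / of_int e) (emb (rep (Qc w)))" by (simp add: c_def V_delta W_def)
  have xw: "x g = 1 / of_int e * of_int (w g)" for g
  proof -
    have "of_int e * x g = of_int (w g)" using ew(4) by (simp add: gsmul_def emb_def fun_eq_iff)
    then show ?thesis using ew(1) by (simp add: field_simps)
  qed
  have "V c - x = gsmul (1 / of_int e) (emb (rep (Qc w) - w))"
    unfolding Vc by (simp add: gsmul_def emb_def fun_eq_iff xw algebra_simps)
  moreover have "(emb (rep (Qc w) - w) :: _ \<Rightarrow> rat) \<in> augpow R (Suc n)" by (rule augpow_emb[OF sR rep_Qc])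
  then have "gsmul (1 / of_int e) (emb (rep (Qc w) - w)) \<in> augpow R (Suc n)"
    by (rule augpow_smul[OF sR ew(2)])
  ultimately have "V c - x \<in> augpow R (Suc n)" by simp
  then have "Qcoset R n (V c) = Qcoset R n x" using Qcoset_eq[OF sR] by blast
  then show ?thesis using ct by metis
qed

end

theorem lemma1p1:
  fixes R :: "rat set" and n :: nat
  assumes "subring_rat R"
  defines "M \<equiv> (Qn (UNIV :: int set) n :: ('g::{finite,ab_group_add} \<Rightarrow> int) set set)"
  defines "T \<equiv> tens R M Qadd"
  shows "(\<forall>X\<in>T. \<forall>c\<in>X. \<forall>c'\<in>X. fval R n c = fval R n c')
     \<and> bij_betw (Fmap R n) T (Qn R n)
     \<and> (\<forall>X\<in>T. \<forall>Y\<in>T. Fmap R n (tadd X Y) = Qadd (Fmap R n X) (Fmap R n Y))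
     \<and> (\<forall>s\<in>R. \<forall>X\<in>T. Fmap R n (tsmul R M Qadd s X) = Qsmul R n s (Fmap R n X))"
proof -
  interpret ctx R n by unfold_locales (rule sr_rat[OF assms(1)])
  have TT: "T = tcls R (MZ n) Qadd ` tfree R (MZ n)" unfolding T_def M_def tens_def ..
  have P1: "\<forall>X\<in>T. \<forall>c\<in>X. \<forall>c'\<in>X. fval R n c = fval R n c'"
  proof (intro ballI)
    fix X c c' assume X: "X \<in> T" and c: "c \<in> X" and c': "c' \<in> X"
    obtain c0 where c0: "c0 \<in> tfree R (MZ n)" "X = tcls R (MZ n) Qadd c0" using X TT by blast
    show "fval R n c = fval R n c'" using fval_tcls[OF c0(1)] c c' c0(2) by simp
  qed
  have inj: "inj_on (Fmap R n) T"
  proof (rule inj_onI)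
    fix X Y assume X: "X \<in> T" and Y: "Y \<in> T" and e: "Fmap R n X = Fmap R n Y"
    obtain c where c: "c \<in> tfree R (MZ n)" "X = tcls R (MZ n) Qadd c" using X TT by blast
    obtain c' where c': "c' \<in> tfree R (MZ n)" "Y = tcls R (MZ n) Qadd c'" using Y TT by blast
    have "Qcoset R n (V c) = Fmap R n X" unfolding c(2) by (rule Fmap_tcls[OF c(1), symmetric])
    also have "\<dots> = Fmap R n Y" by (rule e)
    also have "\<dots> = Qcoset R n (V c')" unfolding c'(2) by (rule Fmap_tcls[OF c'(1)])
    finally have "Qcoset R n (V c) = Qcoset R n (V c')" .
    then have "V c - V c' \<in> augpow R (Suc n)" using Qcoset_eq[OF sR] by blast
    moreover have "V (c - c') = V c - V c'" by (rule V_diff[OF tfree_fin[OF c(1)] tfree_fin[OF c'(1)]])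
    ultimately have "V (c - c') \<in> augpow R (Suc n)" by simp
    then have "c - c' \<in> TR" by (rule key[OF tfree_diff[OF c(1) c'(1)]])
    then show "X = Y" unfolding c(2) c'(2) tcls_eq .
  qed
  have img: "Fmap R n ` T = Qn R n"
  proof (intro set_eqI iffI)
    fix q assume "q \<in> Fmap R n ` T"
    then obtain c where c: "c \<in> tfree R (MZ n)" "q = Fmap R n (tcls R (MZ n) Qadd c)" using TT by blast
    have "q = Qcoset R n (V c)" unfolding c(2) by (rule Fmap_tcls[OF c(1)])
    moreover have "V c \<in> augpow R n" by (rule V_in) (use c(1) in \<open>simp add: tfree_def\<close>)
    ultimately show "q \<in> Qn R n" unfolding Qn_def by blast
  next
    fix q :: "('g \<Rightarrow> rat) set" assume "q \<in> Qn R n"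
    then obtain x where x: "x \<in> augpow R n" "q = Qcoset R n x" unfolding Qn_def by blast
    obtain c where c: "c \<in> tfree R (MZ n)" "Qcoset R n x = Qcoset R n (V c)" using surj_part[OF x(1)] by blast
    have "q = Fmap R n (tcls R (MZ n) Qadd c)" unfolding x(2) c(2) by (rule Fmap_tcls[OF c(1), symmetric])
    then show "q \<in> Fmap R n ` T" using TT c(1) by blast
  qed
  have P3: "\<forall>X\<in>T. \<forall>Y\<in>T. Fmap R n (tadd X Y) = Qadd (Fmap R n X) (Fmap R n Y)"
  proof (intro ballI)
    fix X Y assume X: "X \<in> T" and Y: "Y \<in> T"
    obtain c where c: "c \<in> tfree R (MZ n)" "X = tcls R (MZ n) Qadd c" using X TT by blast
    obtain c' where c': "c' \<in> tfree R (MZ n)" "Y = tcls R (MZ n) Qadd c'" using Y TT by blast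
    have "Fmap R n (tadd X Y) = Fmap R n (tcls R (MZ n) Qadd (c + c'))" unfolding c(2) c'(2) tadd_tcls ..
    also have "\<dots> = Qcoset R n (V (c + c'))" by (rule Fmap_tcls[OF tfree_add[OF c(1) c'(1)]])
    also have "V (c + c') = V c + V c'" by (rule V_add[OF tfree_fin[OF c(1)] tfree_fin[OF c'(1)]])
    also have "Qcoset R n (V c + V c') = Qadd (Qcoset R n (V c)) (Qcoset R n (V c'))"
      by (rule Qadd_Qcoset[OF sR, symmetric])
    also have "\<dots> = Qadd (Fmap R n X) (Fmap R n Y)" unfolding c(2) c'(2) Fmap_tcls[OF c(1)] Fmap_tcls[OF c'(1)] ..
    finally show "Fmap R n (tadd X Y) = Qadd (Fmap R n X) (Fmap R n Y)" .
  qed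
  have P4: "\<forall>s\<in>R. \<forall>X\<in>T. Fmap R n (tsmul R M Qadd s X) = Qsmul R n s (Fmap R n X)"
  proof (intro ballI)
    fix s X assume s: "s \<in> R" and X: "X \<in> T"
    obtain c where c: "c \<in> tfree R (MZ n)" "X = tcls R (MZ n) Qadd c" using X TT by blast
    have "Fmap R n (tsmul R M Qadd s X) = Fmap R n (tcls R (MZ n) Qadd (tsm s c))"
      unfolding c(2) M_def tsmul_tcls[OF s c(1)] ..
    also have "\<dots> = Qcoset R n (V (tsm s c))" by (rule Fmap_tcls[OF tsm_tfree[OF s c(1)]])
    also have "V (tsm s c) = gsmul s (V c)" by (rule V_tsm[OF tfree_fin[OF c(1)]])
    also have "Qcoset R n (gsmul s (V c)) = Qsmul R n s (Qcoset R n (V c))"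
      by (rule Qsmul_Qcoset[OF sR s, symmetric])
    also have "\<dots> = Qsmul R n s (Fmap R n X)" unfolding c(2) Fmap_tcls[OF c(1)] ..
    finally show "Fmap R n (tsmul R M Qadd s X) = Qsmul R n s (Fmap R n X)" .
  qed
  show ?thesis using P1 inj img P3 P4 unfolding bij_betw_def by blast
qed


end
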